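(* Let the standing assumption (A) hold with $p\ge2$. Then every minimizer $(\bar\alpha_1,\bar\alpha_2)\in L^1(\Omega_1)\times L^1(\Omega_2)$ of problem (P$^\dagger$) satisfies $\bar\alpha_i\in L^q(\Omega_i)$ for $i=1,2$.
   Context: Standing assumption (A): $\Omega_1,\Omega_2\subset\mathbb{R}^n$ are compact, $\Omega:=\Omega_1\times\Omega_2$, $c:\Omega\to\mathbb{R}$ is continuous with $c\ge c^\dagger>-\infty$, $\gamma>0$, $p>1$ and $q$ is its conjugate exponent ($1/p+1/q=1$), and $\mu_i\in L^p(\Omega_i)$ satisfy $\mu_i\ge\delta>0$ a.e. and $\int_{\Omega_i}\mu_i\,dx=1$ for $i=1,2$. Problem (P$^\dagger$) is: minimize $\Lambda(\alpha_1,\alpha_2):=\frac1q\|(\alpha_1\oplus\alpha_2-c)_+\|_{L^q(\Omega)}^q-\gamma^{q-1}\int_{\Omega_1}\alpha_1\mu_1\,dx-\gamma^{q-1}\int_{\Omega_2}\alpha_2\mu_2\,dx$ over all $\alpha_i\in L^1(\Omega_i)$, $i=1,2$, with $(\alpha_1\oplus\alpha_2-c)_+/\gamma\in L^q(\Omega)$, where $(\alpha_1\oplus\alpha_2)(x_1,x_2):=\alpha_1(x_1)+\alpha_2(x_2)$ and $t_+=\max(t,0)$. *)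

theory Defs
  imports "HOL-Analysis.Analysis"
begin

text \<open>L^r(S) with respect to Lebesgue measure restricted to S (as a set of representatives).\<close>
definition Lp_on :: "real \<Rightarrow> 'a::euclidean_space set \<Rightarrow> ('a \<Rightarrow> real) set" where
  "Lp_on r S = {f. f \<in> borel_measurable (lebesgue_on S) \<and>
                   integrable (lebesgue_on S) (\<lambda>x. \<bar>f x\<bar> powr r)}"

definition osum :: "('a \<Rightarrow> real) \<Rightarrow> ('b \<Rightarrow> real) \<Rightarrow> ('a \<times> 'b \<Rightarrow> real)" where
  "osum a1 a2 = (\<lambda>(x1, x2). a1 x1 + a2 x2)"

definition Lambda ::
  "('a::euclidean_space \<times> 'a \<Rightarrow> real) \<Rightarrow> real \<Rightarrow> real \<Rightarrow> ('a \<Rightarrow> real) \<Rightarrow> ('a \<Rightarrow> real)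
   \<Rightarrow> 'a set \<Rightarrow> 'a set \<Rightarrow> ('a \<Rightarrow> real) \<Rightarrow> ('a \<Rightarrow> real) \<Rightarrow> real" where
  "Lambda c \<gamma> q \<mu>1 \<mu>2 \<Omega>1 \<Omega>2 a1 a2 =
     (1 / q) * (\<integral>z. (max (osum a1 a2 z - c z) 0) powr q \<partial>lebesgue_on (\<Omega>1 \<times> \<Omega>2))
     - \<gamma> powr (q - 1) * (\<integral>x. a1 x * \<mu>1 x \<partial>lebesgue_on \<Omega>1)
     - \<gamma> powr (q - 1) * (\<integral>x. a2 x * \<mu>2 x \<partial>lebesgue_on \<Omega>2)"

text \<open>Feasible pairs of (P-dagger): alpha_i in L^1(Omega_i), (alpha1 oplus alpha2 - c)_+/gamma in L^q(Omega),
  and the linear terms are finite (alpha_i mu_i integrable); pairs violating the last condition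
  have objective value +infinity in the extended-valued reading and can never be minimizers.\<close>
definition feasible ::
  "('a::euclidean_space \<times> 'a \<Rightarrow> real) \<Rightarrow> real \<Rightarrow> real \<Rightarrow> ('a \<Rightarrow> real) \<Rightarrow> ('a \<Rightarrow> real)
   \<Rightarrow> 'a set \<Rightarrow> 'a set \<Rightarrow> ('a \<Rightarrow> real) \<Rightarrow> ('a \<Rightarrow> real) \<Rightarrow> bool" where
  "feasible c \<gamma> q \<mu>1 \<mu>2 \<Omega>1 \<Omega>2 a1 a2 \<longleftrightarrow>
     integrable (lebesgue_on \<Omega>1) a1 \<and> integrable (lebesgue_on \<Omega>2) a2 \<and>
     (\<lambda>z. max (osum a1 a2 z - c z) 0 / \<gamma>) \<in> Lp_on q (\<Omega>1 \<times> \<Omega>2) \<and>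
     integrable (lebesgue_on \<Omega>1) (\<lambda>x. a1 x * \<mu>1 x) \<and>
     integrable (lebesgue_on \<Omega>2) (\<lambda>x. a2 x * \<mu>2 x)"

definition is_minimizer ::
  "('a::euclidean_space \<times> 'a \<Rightarrow> real) \<Rightarrow> real \<Rightarrow> real \<Rightarrow> ('a \<Rightarrow> real) \<Rightarrow> ('a \<Rightarrow> real)
   \<Rightarrow> 'a set \<Rightarrow> 'a set \<Rightarrow> ('a \<Rightarrow> real) \<Rightarrow> ('a \<Rightarrow> real) \<Rightarrow> bool" where
  "is_minimizer c \<gamma> q \<mu>1 \<mu>2 \<Omega>1 \<Omega>2 a1 a2 \<longleftrightarrow>
     feasible c \<gamma> q \<mu>1 \<mu>2 \<Omega>1 \<Omega>2 a1 a2 \<and>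
     (\<forall>b1 b2. feasible c \<gamma> q \<mu>1 \<mu>2 \<Omega>1 \<Omega>2 b1 b2 \<longrightarrow>
        Lambda c \<gamma> q \<mu>1 \<mu>2 \<Omega>1 \<Omega>2 a1 a2 \<le> Lambda c \<gamma> q \<mu>1 \<mu>2 \<Omega>1 \<Omega>2 b1 b2)"

end

theory Submission
  imports Defs
begin


lemma powr_diff_bounds:
  fixes a b q :: real
  assumes q: "1 \<le> q" and ab: "0 \<le> a" "a \<le> b"
  shows "b powr q - a powr q \<le> q * b powr (q - 1) * (b - a)"
    and "q * a powr (q - 1) * (b - a) \<le> b powr q - a powr q"
proof -
  have "b powr q - a powr q \<le> q * b powr (q - 1) * (b - a) \<and>
        q * a powr (q - 1) * (b - a) \<le> b powr q - a powr q"
  proof (cases "a = b")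
    case True then show ?thesis by simp
  next
    case False
    with ab have lt: "a < b" by simp
    show ?thesis
    proof (cases "a = 0")
      case True
      have b0: "b > 0" using lt True by simp
      have "b powr q = b powr (q - 1) * b" using b0 by (simp add: powr_diff)
      moreover have "0 \<le> b powr (q - 1) * b" using b0 by simp
      ultimately show ?thesis using True q b0 q by (simp add: mult_right_mono mult.commute)
    next
      case False
      with ab have a0: "a > 0" by simp
      have "\<exists>z>a. z < b \<and> b powr q - a powr q = (b - a) * (q * z powr (q - 1))"
        apply (rule MVT2[OF lt])
        using a0 by (auto intro!: derivative_eq_intros)
      then obtain z where z: "z > a" "z < b" "b powr q - a powr q = (b - a) * (q * z powr (q - 1))"
        by blast
      have "z powr (q - 1) \<le> b powr (q - 1)" using z a0 q by (intro powr_mono2) auto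
      moreover have "a powr (q - 1) \<le> z powr (q - 1)" using z a0 q by (intro powr_mono2) auto
      moreover have "(b - a) * (q * z powr (q - 1)) \<le> (b - a) * (q * b powr (q - 1))"
        using z lt q calculation by (intro mult_left_mono) auto
      moreover have "(b - a) * (q * a powr (q - 1)) \<le> (b - a) * (q * z powr (q - 1))"
        using z lt q calculation by (intro mult_left_mono) auto
      ultimately show ?thesis using z(3) by (simp add: algebra_simps)
    qed
  qed
  then show "b powr q - a powr q \<le> q * b powr (q - 1) * (b - a)"
    and "q * a powr (q - 1) * (b - a) \<le> b powr q - a powr q" by auto
qed

lemma phi_upper:
  fixes u v q :: real
  assumes q: "1 \<le> q" and uv: "u \<le> v"
  shows "max v 0 powr q - max u 0 powr q \<le> q * max v 0 powr (q - 1) * (v - u)"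
proof -
  have "max v 0 powr q - max u 0 powr q \<le> q * max v 0 powr (q - 1) * (max v 0 - max u 0)"
    using powr_diff_bounds(1)[OF q, of "max u 0" "max v 0"] uv by auto
  also have "\<dots> \<le> q * max v 0 powr (q - 1) * (v - u)"
    using q uv by (intro mult_left_mono) auto
  finally show ?thesis .
qed

lemma phi_lower:
  fixes u v q :: real
  assumes q: "1 \<le> q" and uv: "u \<le> v"
  shows "q * max u 0 powr (q - 1) * (v - u) \<le> max v 0 powr q - max u 0 powr q"
proof (cases "u \<le> 0")
  case True
  then have "max u 0 = 0" by simp
  moreover have "max u 0 powr q \<le> max v 0 powr q" using uv q by (intro powr_mono2) auto
  ultimately show ?thesis using q by simp
next
  case False
  then show ?thesis using powr_diff_bounds(2)[OF q, of u v] uv by auto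
qed


lemma powr_le_one_plus:
  fixes t e p :: real
  assumes "0 \<le> t" "0 \<le> e" "e \<le> p"
  shows "t powr e \<le> 1 + t powr p"
proof (cases "t \<le> 1")
  case True
  then have "t powr e \<le> 1" using assms by (cases "t = 0") (auto intro: powr_le1)
  then show ?thesis by (smt (verit) powr_ge_zero)
next
  case False
  then have "t powr e \<le> t powr p" using assms by (intro powr_mono) auto
  then show ?thesis by simp
qed

lemma powr_sum_le:
  fixes x y q :: real
  assumes "0 \<le> x" "0 \<le> y" "0 \<le> q"
  shows "(x + y) powr q \<le> 2 powr q * (x powr q + y powr q)"
proof -
  have "(x + y) powr q \<le> (2 * max x y) powr q" using assms by (intro powr_mono2) auto
  also have "\<dots> = 2 powr q * max x y powr q" using assms by (simp add: powr_mult)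
  also have "max x y powr q \<le> x powr q + y powr q"
    by (cases "x \<le> y") (auto simp: max_def)
  then have "2 powr q * max x y powr q \<le> 2 powr q * (x powr q + y powr q)"
    by (intro mult_left_mono) auto
  finally show ?thesis .
qed

lemma phi_shift_le:
  fixes u s q :: real
  assumes "0 \<le> s" "s \<le> 1" "0 \<le> q"
  shows "max (u + s) 0 powr q \<le> 2 powr q * (max u 0 powr q + 1)"
proof -
  have "max (u + s) 0 powr q \<le> (max u 0 + 1) powr q" using assms by (intro powr_mono2) auto
  also have "\<dots> \<le> 2 powr q * (max u 0 powr q + 1 powr q)"
    using assms by (intro powr_sum_le) auto
  finally show ?thesis by simp
qed


locale core_setup =
  fixes M1 :: "'a measure" and M2 :: "'b measure" and c :: "'a \<times> 'b \<Rightarrow> real"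
    and g1 \<mu> :: "'a \<Rightarrow> real" and g2 :: "'b \<Rightarrow> real"
    and p q \<gamma> \<delta> c0 C :: real
  assumes fin1: "finite_measure M1" and fin2: "finite_measure M2"
    and q1: "1 < q" and q2: "q \<le> 2" and pq: "1/p + 1/q = 1" and p1: "1 < p"
    and gam: "0 < \<gamma>" and del: "0 < \<delta>"
    and cm[measurable]: "c \<in> borel_measurable (M1 \<Otimes>\<^sub>M M2)"
    and cb: "\<And>z. z \<in> space (M1 \<Otimes>\<^sub>M M2) \<Longrightarrow> c0 \<le> c z \<and> c z \<le> C"
    and m2pos: "0 < measure M2 (space M2)"
    and mum[measurable]: "\<mu> \<in> borel_measurable M1"
    and mud: "AE x in M1. \<delta> \<le> \<mu> x"
    and mup: "integrable M1 (\<lambda>x. \<bar>\<mu> x\<bar> powr p)"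
    and g1i: "integrable M1 g1" and g2i: "integrable M2 g2"
    and g1mi: "integrable M1 (\<lambda>x. g1 x * \<mu> x)"
    and g12i: "integrable (M1 \<Otimes>\<^sub>M M2) (\<lambda>z. max (g1 (fst z) + g2 (snd z) - c z) 0 powr q)"
    and mini: "\<And>b. b \<in> borel_measurable M1 \<Longrightarrow> integrable M1 b \<Longrightarrow>
       integrable M1 (\<lambda>x. b x * \<mu> x) \<Longrightarrow>
       integrable (M1 \<Otimes>\<^sub>M M2) (\<lambda>z. max (b (fst z) + g2 (snd z) - c z) 0 powr q) \<Longrightarrow>
       (1/q) * (\<integral>z. max (g1 (fst z) + g2 (snd z) - c z) 0 powr q \<partial>(M1 \<Otimes>\<^sub>M M2))
         - \<gamma> * (\<integral>x. g1 x * \<mu> x \<partial>M1)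
       \<le> (1/q) * (\<integral>z. max (b (fst z) + g2 (snd z) - c z) 0 powr q \<partial>(M1 \<Otimes>\<^sub>M M2))
         - \<gamma> * (\<integral>x. b x * \<mu> x \<partial>M1)"
begin

sublocale M1: finite_measure M1 by (rule fin1)
sublocale M2: finite_measure M2 by (rule fin2)
sublocale P: pair_sigma_finite M1 M2 ..
sublocale PF: finite_measure "M1 \<Otimes>\<^sub>M M2"
  by (rule finite_measure_pair_measure[OF fin2 fin1])

lemma g1m[measurable]: "g1 \<in> borel_measurable M1" using g1i by auto
lemma g2m[measurable]: "g2 \<in> borel_measurable M2" using g2i by auto

lemma pq_rel: "(p - 1) * (q - 1) = 1" "(p - 1) * q = p"
proof -
  have "p + q = p * q" using pq p1 q1 by (simp add: field_simps)
  then show "(p - 1) * (q - 1) = 1" "(p - 1) * q = p" by (simp_all add: algebra_simps)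
qed

lemma mu_int: "integrable M1 \<mu>"
proof (rule Bochner_Integration.integrable_bound)
  show "integrable M1 (\<lambda>x. 1 + \<bar>\<mu> x\<bar> powr p)" using mup by auto
  show "AE x in M1. norm (\<mu> x) \<le> norm (1 + \<bar>\<mu> x\<bar> powr p)"
    using powr_le_one_plus[of "\<bar>\<mu> _\<bar>" 1 p] p1 by auto
qed simp

end

context core_setup begin

definition w :: "real \<Rightarrow> 'b \<Rightarrow> real" where
  "w L y = max (g2 y - L - c0) 0 powr (q - 1)"

lemma w_m[measurable]: "w L \<in> borel_measurable M2" unfolding w_def by measurable

lemma w_bound: "0 \<le> L \<Longrightarrow> w L y \<le> 1 + (\<bar>g2 y\<bar> + \<bar>c0\<bar>)"
proof -
  assume L: "0 \<le> L"
  have "w L y \<le> 1 + max (g2 y - L - c0) 0 powr 1"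
    unfolding w_def using q1 q2 by (intro powr_le_one_plus) auto
  also have "\<dots> \<le> 1 + (\<bar>g2 y\<bar> + \<bar>c0\<bar>)" using L by auto
  finally show ?thesis .
qed

lemma w_int: "0 \<le> L \<Longrightarrow> integrable M2 (w L)"
  apply (rule Bochner_Integration.integrable_bound[where f="\<lambda>y. 1 + (\<bar>g2 y\<bar> + \<bar>c0\<bar>)"])
  using g2i w_bound by (auto simp: w_def)

lemma exists_L: "\<exists>L\<ge>0. (\<integral>y. w L y \<partial>M2) < \<gamma> * \<delta>"
proof -
  have lim: "(\<lambda>n. \<integral>y. w (real n) y \<partial>M2) \<longlonglongrightarrow> (\<integral>y. 0 \<partial>M2)"
  proof (rule integral_dominated_convergence[where w="\<lambda>y. 1 + (\<bar>g2 y\<bar> + \<bar>c0\<bar>)"])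
    show "integrable M2 (\<lambda>y. 1 + (\<bar>g2 y\<bar> + \<bar>c0\<bar>))" using g2i by auto
    show "AE y in M2. (\<lambda>n. w (real n) y) \<longlonglongrightarrow> 0"
    proof (rule AE_I2)
      fix y
      have "eventually (\<lambda>n. w (real n) y = 0) sequentially"
      proof -
        obtain N :: nat where "real N > g2 y - c0" using reals_Archimedean2 by blast
        then show ?thesis unfolding eventually_sequentially w_def
          by (intro exI[of _ N]) auto
      qed
      then show "(\<lambda>n. w (real n) y) \<longlonglongrightarrow> 0" by (rule tendsto_eventually)
    qed
    show "\<And>n. AE y in M2. norm (w (real n) y) \<le> 1 + (\<bar>g2 y\<bar> + \<bar>c0\<bar>)"
      using w_bound by (auto simp: w_def)
  qed auto
  then have "eventually (\<lambda>n. (\<integral>y. w (real n) y \<partial>M2) < \<gamma> * \<delta>) sequentially"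
    using gam del by (intro order_tendstoD) auto
  then obtain n where "(\<integral>y. w (real n) y \<partial>M2) < \<gamma> * \<delta>" by (auto simp: eventually_sequentially)
  then show ?thesis by (intro exI[of _ "real n"]) auto
qed

end

context core_setup begin

lemma lower: "\<exists>L. AE x in M1. -L \<le> g1 x"
proof -
  obtain L where L: "L \<ge> 0" "(\<integral>y. w L y \<partial>M2) < \<gamma> * \<delta>" using exists_L by blast
  define E where "E = {x \<in> space M1. g1 x < -L - 1}"
  have E[measurable]: "E \<in> sets M1" unfolding E_def by measurable
  define b where "b x = g1 x + indicator E x" for x
  have bm[measurable]: "b \<in> borel_measurable M1" unfolding b_def by measurable
  have bi: "integrable M1 b" unfolding b_def
    using g1i by (intro Bochner_Integration.integrable_add integrable_real_indicator) (auto simp: M1.emeasure_eq_measure)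
  have Emi: "integrable M1 (\<lambda>x. indicator E x * \<mu> x)"
    using integrable_mult_indicator[OF E mu_int] by simp
  have bmi: "integrable M1 (\<lambda>x. b x * \<mu> x)" unfolding b_def distrib_right
    using g1mi Emi by (intro Bochner_Integration.integrable_add) auto
  define u where "u z = g1 (fst z) + g2 (snd z) - c z" for z
  define v where "v z = b (fst z) + g2 (snd z) - c z" for z
  have uv: "v z = u z + indicator E (fst z)" for z unfolding u_def v_def b_def by simp
  have um[measurable]: "u \<in> borel_measurable (M1 \<Otimes>\<^sub>M M2)" unfolding u_def by measurable
  have vm[measurable]: "v \<in> borel_measurable (M1 \<Otimes>\<^sub>M M2)" unfolding v_def by measurable
  have ui: "integrable (M1 \<Otimes>\<^sub>M M2) (\<lambda>z. max (u z) 0 powr q)" using g12i unfolding u_def .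
  have vi: "integrable (M1 \<Otimes>\<^sub>M M2) (\<lambda>z. max (v z) 0 powr q)"
  proof (rule Bochner_Integration.integrable_bound)
    show "integrable (M1 \<Otimes>\<^sub>M M2) (\<lambda>z. 2 powr q * (max (u z) 0 powr q + 1))"
      using ui by (intro integrable_mult_right Bochner_Integration.integrable_add) auto
    show "AE z in M1 \<Otimes>\<^sub>M M2. norm (max (v z) 0 powr q) \<le> norm (2 powr q * (max (u z) 0 powr q + 1))"
    proof (intro AE_I2)
      fix z
      have "max (u z + indicator E (fst z)) 0 powr q \<le> 2 powr q * (max (u z) 0 powr q + 1)"
        using q1 by (intro phi_shift_le) (auto simp: indicator_def)
      then show "norm (max (v z) 0 powr q) \<le> norm (2 powr q * (max (u z) 0 powr q + 1))"
        unfolding uv by simp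
    qed
  qed simp
  have ineq: "(1/q) * (\<integral>z. max (u z) 0 powr q \<partial>(M1 \<Otimes>\<^sub>M M2)) - \<gamma> * (\<integral>x. g1 x * \<mu> x \<partial>M1)
       \<le> (1/q) * (\<integral>z. max (v z) 0 powr q \<partial>(M1 \<Otimes>\<^sub>M M2)) - \<gamma> * (\<integral>x. b x * \<mu> x \<partial>M1)"
    using mini[OF bm bi bmi] vi unfolding u_def v_def by simp
  have bint: "(\<integral>x. b x * \<mu> x \<partial>M1) = (\<integral>x. g1 x * \<mu> x \<partial>M1) + (\<integral>x. indicator E x * \<mu> x \<partial>M1)"
    unfolding b_def distrib_right using g1mi Emi by (rule Bochner_Integration.integral_add)
  have diffint: "(\<integral>z. (max (v z) 0 powr q - max (u z) 0 powr q) / q \<partial>(M1 \<Otimes>\<^sub>M M2)) =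
      (1/q) * ((\<integral>z. max (v z) 0 powr q \<partial>(M1 \<Otimes>\<^sub>M M2)) - (\<integral>z. max (u z) 0 powr q \<partial>(M1 \<Otimes>\<^sub>M M2)))"
    using ui vi by (simp add: Bochner_Integration.integral_diff)
  have key1: "\<gamma> * (\<integral>x. indicator E x * \<mu> x \<partial>M1) \<le>
      (\<integral>z. (max (v z) 0 powr q - max (u z) 0 powr q) / q \<partial>(M1 \<Otimes>\<^sub>M M2))"
    using ineq bint diffint by (simp add: algebra_simps)
  have uvle: "u z \<le> v z" for z unfolding uv by simp
  have nonneg: "0 \<le> (max (v z) 0 powr q - max (u z) 0 powr q) / q" for z
    using uvle[of z] q1 by (intro divide_nonneg_pos) (auto intro!: powr_mono2)
  have pw: "(max (v z) 0 powr q - max (u z) 0 powr q) / q \<le> indicator E (fst z) * w L (snd z)"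
    if z: "z \<in> space (M1 \<Otimes>\<^sub>M M2)" for z
  proof (cases "fst z \<in> E")
    case False
    then show ?thesis unfolding uv by simp
  next
    case True
    have "max (v z) 0 powr q - max (u z) 0 powr q \<le> q * max (v z) 0 powr (q - 1) * (v z - u z)"
      using q1 uvle[of z] by (intro phi_upper) auto
    also have "\<dots> = q * max (v z) 0 powr (q - 1)" using True unfolding uv by simp
    also have "max (v z) 0 powr (q - 1) \<le> w L (snd z)"
      unfolding w_def
    proof (intro powr_mono2)
      have "c0 \<le> c z" using cb[OF z] by simp
      moreover have "g1 (fst z) < -L - 1" using True unfolding E_def by simp
      ultimately show "max (v z) 0 \<le> max (g2 (snd z) - L - c0) 0"
        unfolding uv u_def using True by auto
    qed (use q1 in auto)
    finally show ?thesis using True q1 by (simp add: divide_le_eq mult.commute)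
  qed
  have wint: "integrable M2 (w L)" using w_int L by simp
  have wnn: "0 \<le> w L y" for y unfolding w_def by simp
  have wI: "0 \<le> (\<integral>y. w L y \<partial>M2)" using wnn by (simp add: Bochner_Integration.integral_nonneg)
  have "ennreal (\<integral>z. (max (v z) 0 powr q - max (u z) 0 powr q) / q \<partial>(M1 \<Otimes>\<^sub>M M2))
      = (\<integral>\<^sup>+z. ennreal ((max (v z) 0 powr q - max (u z) 0 powr q) / q) \<partial>(M1 \<Otimes>\<^sub>M M2))"
    using ui vi nonneg by (intro nn_integral_eq_integral[symmetric]) auto
  also have "\<dots> \<le> (\<integral>\<^sup>+z. ennreal (indicator E (fst z) * w L (snd z)) \<partial>(M1 \<Otimes>\<^sub>M M2))"
    using pw by (intro nn_integral_mono ennreal_leI) auto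
  also have "\<dots> = (\<integral>\<^sup>+x. \<integral>\<^sup>+y. ennreal (indicator E x * w L y) \<partial>M2 \<partial>M1)"
    using M2.nn_integral_fst[of "\<lambda>z. ennreal (indicator E (fst z) * w L (snd z))" M1] by simp
  also have "\<dots> = (\<integral>\<^sup>+x. indicator E x * ennreal (\<integral>y. w L y \<partial>M2) \<partial>M1)"
  proof (intro nn_integral_cong)
    fix x
    have "(\<integral>\<^sup>+y. ennreal (indicator E x * w L y) \<partial>M2) = (\<integral>\<^sup>+y. indicator E x * ennreal (w L y) \<partial>M2)"
      by (intro nn_integral_cong) (auto simp: ennreal_mult' indicator_def)
    also have "\<dots> = indicator E x * (\<integral>\<^sup>+y. ennreal (w L y) \<partial>M2)" by (rule nn_integral_cmult) simp
    also have "(\<integral>\<^sup>+y. ennreal (w L y) \<partial>M2) = ennreal (\<integral>y. w L y \<partial>M2)"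
      using wint wnn by (intro nn_integral_eq_integral) auto
    finally show "(\<integral>\<^sup>+y. ennreal (indicator E x * w L y) \<partial>M2) = indicator E x * ennreal (\<integral>y. w L y \<partial>M2)" .
  qed
  also have "\<dots> = ennreal (\<integral>y. w L y \<partial>M2) * emeasure M1 E"
    by (subst mult.commute) (simp add: nn_integral_cmult_indicator)
  also have "\<dots> = ennreal ((\<integral>y. w L y \<partial>M2) * measure M1 E)"
    using wI by (simp add: M1.emeasure_eq_measure ennreal_mult)
  finally have e1: "ennreal (\<integral>z. (max (v z) 0 powr q - max (u z) 0 powr q) / q \<partial>(M1 \<Otimes>\<^sub>M M2))
      \<le> ennreal ((\<integral>y. w L y \<partial>M2) * measure M1 E)" .
  have r1: "(\<integral>z. (max (v z) 0 powr q - max (u z) 0 powr q) / q \<partial>(M1 \<Otimes>\<^sub>M M2))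
      \<le> (\<integral>y. w L y \<partial>M2) * measure M1 E"
    using e1 wI by (subst (asm) ennreal_le_iff) auto
  have "(\<integral>x. \<delta> * indicator E x \<partial>M1) \<le> (\<integral>x. indicator E x * \<mu> x \<partial>M1)"
  proof (intro integral_mono_AE)
    show "integrable M1 (\<lambda>x. \<delta> * indicator E x)"
      by (intro integrable_mult_right integrable_real_indicator) (auto simp: M1.emeasure_eq_measure)
    show "AE x in M1. \<delta> * indicator E x \<le> indicator E x * \<mu> x"
      using mud by eventually_elim (auto simp: indicator_def)
  qed (rule Emi)
  then have r2: "\<delta> * measure M1 E \<le> (\<integral>x. indicator E x * \<mu> x \<partial>M1)" by simp
  have "\<gamma> * \<delta> * measure M1 E \<le> (\<integral>y. w L y \<partial>M2) * measure M1 E"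
  proof -
    have "\<gamma> * (\<delta> * measure M1 E) \<le> \<gamma> * (\<integral>x. indicator E x * \<mu> x \<partial>M1)"
      using r2 gam by (intro mult_left_mono) auto
    then show ?thesis using r1 key1 by (simp add: mult.assoc)
  qed
  have "measure M1 E = 0"
  proof (rule ccontr)
    assume "measure M1 E \<noteq> 0"
    then have "measure M1 E > 0" using measure_nonneg[of M1 E] by linarith
    then show False using \<open>\<gamma> * \<delta> * measure M1 E \<le> (\<integral>y. w L y \<partial>M2) * measure M1 E\<close> L(2)
      by (simp add: mult_le_cancel_right)
  qed
  then have "E \<in> null_sets M1" using E by (simp add: M1.emeasure_eq_measure null_sets_def)
  then have "AE x in M1. x \<notin> E" by (rule AE_not_in)
  moreover have "AE x in M1. x \<in> space M1" by (rule AE_space)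
  ultimately have "AE x in M1. -(L + 1) \<le> g1 x" by eventually_elim (auto simp: E_def)
  then show ?thesis by blast
qed

end

context core_setup begin

lemma E2_big: "\<exists>K>0. measure M2 (space M2) / 2 \<le> measure M2 {y \<in> space M2. \<bar>g2 y\<bar> < K}"
proof -
  define m2 where "m2 = measure M2 (space M2)"
  define I where "I = (\<integral>y. \<bar>g2 y\<bar> \<partial>M2)"
  define K where "K = 2 * I / m2 + 1"
  have I0: "0 \<le> I" unfolding I_def by simp
  have m2p: "0 < m2" using m2pos unfolding m2_def .
  have K0: "0 < K" unfolding K_def using I0 m2p by (simp add: add_nonneg_pos)
  have mk: "measure M2 {y \<in> space M2. K \<le> \<bar>g2 y\<bar>} \<le> I / K"
    unfolding I_def using g2i K0 by (intro integral_Markov_inequality_measure[where A="space M2"]) auto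
  have "I / K < m2 / 2"
  proof -
    have "I < K * (m2 / 2)" unfolding K_def using m2p by (simp add: field_simps)
    then show ?thesis using K0 by (simp add: divide_less_eq mult.commute)
  qed
  have "{y \<in> space M2. \<bar>g2 y\<bar> < K} = space M2 - {y \<in> space M2. K \<le> \<bar>g2 y\<bar>}" by auto
  then have "measure M2 {y \<in> space M2. \<bar>g2 y\<bar> < K} = m2 - measure M2 {y \<in> space M2. K \<le> \<bar>g2 y\<bar>}"
    unfolding m2_def by (simp add: M2.finite_measure_compl)
  then show ?thesis using mk \<open>I / K < m2 / 2\<close> K0 unfolding m2_def by (intro exI[of _ K] conjI) linarith+
qed

end

context core_setup begin

definition tt :: "'a \<Rightarrow> real" where
  "tt x = (2 * \<gamma> / measure M2 (space M2) * max (\<mu> x) 0) powr (p - 1)"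

lemma tt_m[measurable]: "tt \<in> borel_measurable M1" unfolding tt_def by measurable

lemma tt_nn: "0 \<le> tt x" unfolding tt_def by simp

lemma tt_power: "tt x powr (q - 1) = 2 * \<gamma> / measure M2 (space M2) * max (\<mu> x) 0"
proof -
  have "tt x powr (q - 1) = (2 * \<gamma> / measure M2 (space M2) * max (\<mu> x) 0) powr 1"
    unfolding tt_def powr_powr pq_rel(1) ..
  also have "\<dots> = 2 * \<gamma> / measure M2 (space M2) * max (\<mu> x) 0"
    using gam m2pos by (intro powr_one) auto
  finally show ?thesis .
qed

lemma tt_int: "integrable M1 tt"
proof (rule Bochner_Integration.integrable_bound)
  define A where "A = 2 * \<gamma> / measure M2 (space M2)"
  have A0: "0 \<le> A" unfolding A_def using gam m2pos by simp
  show "integrable M1 (\<lambda>x. 1 + A powr p * \<bar>\<mu> x\<bar> powr p)" using mup by auto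
  show "AE x in M1. norm (tt x) \<le> norm (1 + A powr p * \<bar>\<mu> x\<bar> powr p)"
  proof (intro AE_I2)
    fix x
    have "tt x \<le> 1 + (A * max (\<mu> x) 0) powr p"
      unfolding tt_def A_def[symmetric] using A0 p1 by (intro powr_le_one_plus) auto
    also have "(A * max (\<mu> x) 0) powr p = A powr p * max (\<mu> x) 0 powr p"
      using A0 by (simp add: powr_mult)
    also have "max (\<mu> x) 0 powr p \<le> \<bar>\<mu> x\<bar> powr p" using p1 by (intro powr_mono2) auto
    finally have "tt x \<le> 1 + A powr p * \<bar>\<mu> x\<bar> powr p"
      using A0 by (smt (verit) mult_left_mono powr_ge_zero)
    then show "norm (tt x) \<le> norm (1 + A powr p * \<bar>\<mu> x\<bar> powr p)" using tt_nn[of x] by simp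
  qed
qed simp

lemma tt_mu_int: "integrable M1 (\<lambda>x. tt x * \<mu> x)"
proof (rule Bochner_Integration.integrable_bound)
  define A where "A = 2 * \<gamma> / measure M2 (space M2)"
  have A0: "0 \<le> A" unfolding A_def using gam m2pos by simp
  show "integrable M1 (\<lambda>x. A powr (p - 1) * \<bar>\<mu> x\<bar> powr p)" using mup by auto
  show "AE x in M1. norm (tt x * \<mu> x) \<le> norm (A powr (p - 1) * \<bar>\<mu> x\<bar> powr p)"
  proof (intro AE_I2)
    fix x
    show "norm (tt x * \<mu> x) \<le> norm (A powr (p - 1) * \<bar>\<mu> x\<bar> powr p)"
    proof (cases "\<mu> x > 0")
      case True
      have "tt x * \<mu> x = A powr (p - 1) * (\<mu> x powr (p - 1) * \<mu> x powr 1)"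
        unfolding tt_def A_def[symmetric] using True A0 by (simp add: powr_mult)
      also have "\<mu> x powr (p - 1) * \<mu> x powr 1 = \<mu> x powr p"
        by (subst powr_add[symmetric]) simp
      finally show ?thesis using True A0 by simp
    next
      case False
      then have "tt x = 0" unfolding tt_def by simp
      then show ?thesis by simp
    qed
  qed
qed simp

end

context core_setup begin

lemma upper: "\<exists>K. AE x in M1. g1 x \<le> K + tt x"
proof -
  define m2 where "m2 = measure M2 (space M2)"
  have m2p: "0 < m2" using m2pos unfolding m2_def .
  obtain K where K: "K > 0" "m2 / 2 \<le> measure M2 {y \<in> space M2. \<bar>g2 y\<bar> < K}"
    using E2_big unfolding m2_def by blast
  define E2 where "E2 = {y \<in> space M2. \<bar>g2 y\<bar> < K}"
  have E2m[measurable]: "E2 \<in> sets M2" unfolding E2_def by measurable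
  define h where "h x = K + \<bar>C\<bar> + 1 + tt x" for x
  have hm[measurable]: "h \<in> borel_measurable M1" unfolding h_def by measurable
  have strict: "ennreal (\<gamma> * \<mu> x) < (\<integral>\<^sup>+y. ennreal (max (h x + g2 y - c (x, y)) 0 powr (q - 1)) \<partial>M2)"
    if x: "x \<in> space M1" for x
  proof -
    have "ennreal ((1 + tt x) powr (q - 1) * (m2 / 2)) \<le> ennreal ((1 + tt x) powr (q - 1)) * emeasure M2 E2"
    proof -
      have "ennreal ((1 + tt x) powr (q - 1) * (m2 / 2)) = ennreal ((1 + tt x) powr (q - 1)) * ennreal (m2 / 2)"
        by (rule ennreal_mult) (use m2p in auto)
      also have "ennreal (m2 / 2) \<le> emeasure M2 E2"
        using K(2) unfolding E2_def by (simp add: M2.emeasure_eq_measure)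
      finally show ?thesis by (simp add: mult_left_mono)
    qed
    also have "\<dots> = (\<integral>\<^sup>+y. ennreal ((1 + tt x) powr (q - 1)) * indicator E2 y \<partial>M2)"
      by (simp add: nn_integral_cmult_indicator)
    also have "\<dots> \<le> (\<integral>\<^sup>+y. ennreal (max (h x + g2 y - c (x, y)) 0 powr (q - 1)) \<partial>M2)"
    proof (intro nn_integral_mono)
      fix y assume y: "y \<in> space M2"
      show "ennreal ((1 + tt x) powr (q - 1)) * indicator E2 y
            \<le> ennreal (max (h x + g2 y - c (x, y)) 0 powr (q - 1))"
      proof (cases "y \<in> E2")
        case True
        have "c (x, y) \<le> C" using cb[of "(x, y)"] x y by (simp add: space_pair_measure)
        moreover have "-K < g2 y" using True unfolding E2_def by auto
        ultimately have "1 + tt x \<le> max (h x + g2 y - c (x, y)) 0" unfolding h_def by auto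
        then have "(1 + tt x) powr (q - 1) \<le> max (h x + g2 y - c (x, y)) 0 powr (q - 1)"
          using q1 tt_nn[of x] by (intro powr_mono2) auto
        then show ?thesis using True by (simp add: ennreal_leI)
      qed simp
    qed
    finally have lb: "ennreal ((1 + tt x) powr (q - 1) * (m2 / 2))
        \<le> (\<integral>\<^sup>+y. ennreal (max (h x + g2 y - c (x, y)) 0 powr (q - 1)) \<partial>M2)" .
    have "\<gamma> * \<mu> x \<le> m2 / 2 * (2 * \<gamma> / m2 * max (\<mu> x) 0)"
      using m2p gam by (simp add: field_simps mult_left_mono)
    also have "\<dots> = m2 / 2 * tt x powr (q - 1)" unfolding tt_power m2_def ..
    also have "\<dots> < m2 / 2 * (1 + tt x) powr (q - 1)"
      using m2p q1 tt_nn[of x] by (intro mult_strict_left_mono powr_less_mono2) auto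
    finally have "ennreal (\<gamma> * \<mu> x) < ennreal ((1 + tt x) powr (q - 1) * (m2 / 2))"
      using m2p tt_nn[of x] by (intro ennreal_lessI) (auto simp: mult.commute add_nonneg_pos)
    then show ?thesis using lb by (rule less_le_trans)
  qed
  define b where "b x = min (g1 x) (h x)" for x
  have bm[measurable]: "b \<in> borel_measurable M1" unfolding b_def by measurable
  have hi: "integrable M1 h" unfolding h_def using tt_int by auto
  have hmi: "integrable M1 (\<lambda>x. h x * \<mu> x)"
    unfolding h_def distrib_right using tt_mu_int mu_int by auto
  have bi: "integrable M1 b"
  proof (rule Bochner_Integration.integrable_bound)
    show "integrable M1 (\<lambda>x. \<bar>g1 x\<bar> + \<bar>h x\<bar>)" using g1i hi by auto
    show "AE x in M1. norm (b x) \<le> norm (\<bar>g1 x\<bar> + \<bar>h x\<bar>)" by (intro AE_I2) (auto simp: b_def)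
  qed simp
  have bmi: "integrable M1 (\<lambda>x. b x * \<mu> x)"
  proof (rule Bochner_Integration.integrable_bound)
    show "integrable M1 (\<lambda>x. \<bar>g1 x * \<mu> x\<bar> + \<bar>h x * \<mu> x\<bar>)" using g1mi hmi by auto
    show "AE x in M1. norm (b x * \<mu> x) \<le> norm (\<bar>g1 x * \<mu> x\<bar> + \<bar>h x * \<mu> x\<bar>)"
      by (intro AE_I2) (auto simp: b_def min_def)
  qed simp
  define u where "u z = g1 (fst z) + g2 (snd z) - c z" for z
  define v where "v z = b (fst z) + g2 (snd z) - c z" for z
  define D where "D x = g1 x - b x" for x
  have Dm[measurable]: "D \<in> borel_measurable M1" unfolding D_def by measurable
  have Dnn: "0 \<le> D x" for x unfolding D_def b_def by simp
  have uv: "u z = v z + D (fst z)" for z unfolding u_def v_def D_def by simp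
  have um[measurable]: "u \<in> borel_measurable (M1 \<Otimes>\<^sub>M M2)" unfolding u_def by measurable
  have vm[measurable]: "v \<in> borel_measurable (M1 \<Otimes>\<^sub>M M2)" unfolding v_def by measurable
  have ui: "integrable (M1 \<Otimes>\<^sub>M M2) (\<lambda>z. max (u z) 0 powr q)" using g12i unfolding u_def .
  have vi: "integrable (M1 \<Otimes>\<^sub>M M2) (\<lambda>z. max (v z) 0 powr q)"
  proof (rule Bochner_Integration.integrable_bound)
    show "AE z in M1 \<Otimes>\<^sub>M M2. norm (max (v z) 0 powr q) \<le> norm (max (u z) 0 powr q)"
    proof (intro AE_I2)
      fix z
      have "v z \<le> u z" by (simp add: uv Dnn)
      then have "max (v z) 0 \<le> max (u z) 0" by (rule max.mono) simp
      then show "norm (max (v z) 0 powr q) \<le> norm (max (u z) 0 powr q)"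
        using q1 by (simp add: powr_mono2)
    qed
  qed (use ui in auto)
  have ineq: "(1/q) * (\<integral>z. max (u z) 0 powr q \<partial>(M1 \<Otimes>\<^sub>M M2)) - \<gamma> * (\<integral>x. g1 x * \<mu> x \<partial>M1)
       \<le> (1/q) * (\<integral>z. max (v z) 0 powr q \<partial>(M1 \<Otimes>\<^sub>M M2)) - \<gamma> * (\<integral>x. b x * \<mu> x \<partial>M1)"
    using mini[OF bm bi bmi] vi unfolding u_def v_def by simp
  have Deq: "\<gamma> * D x * \<mu> x = \<gamma> * (g1 x * \<mu> x - b x * \<mu> x)" for x
    unfolding D_def by (simp add: left_diff_distrib right_diff_distrib mult.assoc)
  have Dmi: "integrable M1 (\<lambda>x. \<gamma> * D x * \<mu> x)"
    unfolding Deq using g1mi bmi by (intro integrable_mult_right Bochner_Integration.integrable_diff)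
  have Dint: "(\<integral>x. \<gamma> * D x * \<mu> x \<partial>M1) = \<gamma> * ((\<integral>x. g1 x * \<mu> x \<partial>M1) - (\<integral>x. b x * \<mu> x \<partial>M1))"
    unfolding Deq using g1mi bmi by (simp add: Bochner_Integration.integral_diff)
  have diffint: "(\<integral>z. (max (u z) 0 powr q - max (v z) 0 powr q) / q \<partial>(M1 \<Otimes>\<^sub>M M2)) =
      (1/q) * ((\<integral>z. max (u z) 0 powr q \<partial>(M1 \<Otimes>\<^sub>M M2)) - (\<integral>z. max (v z) 0 powr q \<partial>(M1 \<Otimes>\<^sub>M M2)))"
    using ui vi by (simp add: Bochner_Integration.integral_diff)
  have key: "(\<integral>z. (max (u z) 0 powr q - max (v z) 0 powr q) / q \<partial>(M1 \<Otimes>\<^sub>M M2))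
      \<le> (\<integral>x. \<gamma> * D x * \<mu> x \<partial>M1)"
    using ineq unfolding Dint diffint by (simp add: right_diff_distrib)
  have nonneg: "0 \<le> (max (u z) 0 powr q - max (v z) 0 powr q) / q" for z
  proof -
    have "v z \<le> u z" by (simp add: uv Dnn)
    then have "max (v z) 0 \<le> max (u z) 0" by (rule max.mono) simp
    then show ?thesis using q1 by (intro divide_nonneg_pos) (auto simp: powr_mono2)
  qed
  have pw: "D (fst z) * max (v z) 0 powr (q - 1) \<le> (max (u z) 0 powr q - max (v z) 0 powr q) / q" for z
  proof -
    have "q * max (v z) 0 powr (q - 1) * (u z - v z) \<le> max (u z) 0 powr q - max (v z) 0 powr q"
      using q1 Dnn[of "fst z"] by (intro phi_lower) (auto simp: uv)
    then show ?thesis using q1 by (simp add: uv le_divide_eq mult.commute mult.left_commute)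
  qed
  define G where "G x = (\<integral>\<^sup>+y. ennreal (D x * max (v (x, y)) 0 powr (q - 1)) \<partial>M2)" for x
  define f where "f x = ennreal (\<gamma> * D x * \<mu> x)" for x
  have Gm[measurable]: "G \<in> borel_measurable M1" unfolding G_def by measurable
  have fm[measurable]: "f \<in> borel_measurable M1" unfolding f_def by measurable
  have Dmunn: "AE x in M1. 0 \<le> \<gamma> * D x * \<mu> x"
    using mud del gam Dnn by (auto elim!: eventually_mono intro!: mult_nonneg_nonneg)
  have "(\<integral>\<^sup>+x. G x \<partial>M1) = (\<integral>\<^sup>+z. ennreal (D (fst z) * max (v z) 0 powr (q - 1)) \<partial>(M1 \<Otimes>\<^sub>M M2))"
    unfolding G_def
    using M2.nn_integral_fst[of "\<lambda>z. ennreal (D (fst z) * max (v z) 0 powr (q - 1))" M1] by simp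
  also have "\<dots> \<le> (\<integral>\<^sup>+z. ennreal ((max (u z) 0 powr q - max (v z) 0 powr q) / q) \<partial>(M1 \<Otimes>\<^sub>M M2))"
    using pw by (intro nn_integral_mono ennreal_leI) auto
  also have "\<dots> = ennreal (\<integral>z. (max (u z) 0 powr q - max (v z) 0 powr q) / q \<partial>(M1 \<Otimes>\<^sub>M M2))"
    using ui vi nonneg by (intro nn_integral_eq_integral) auto
  also have "\<dots> \<le> ennreal (\<integral>x. \<gamma> * D x * \<mu> x \<partial>M1)" using key by (rule ennreal_leI)
  also have "\<dots> = (\<integral>\<^sup>+x. f x \<partial>M1)"
    unfolding f_def using Dmi Dmunn by (intro nn_integral_eq_integral[symmetric]) auto
  finally have Gf: "(\<integral>\<^sup>+x. G x \<partial>M1) \<le> (\<integral>\<^sup>+x. f x \<partial>M1)" .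
  have ffin: "(\<integral>\<^sup>+x. f x \<partial>M1) \<noteq> \<infinity>"
    unfolding f_def using Dmi Dmunn by (subst nn_integral_eq_integral) auto
  have fG: "f x \<le> G x \<and> (0 < D x \<longrightarrow> f x < G x)" if x: "x \<in> space M1" for x
  proof (cases "D x = 0")
    case True
    then show ?thesis by (simp add: f_def)
  next
    case False
    then have Dp: "0 < D x" using Dnn[of x] by simp
    then have bh: "b x = h x" unfolding D_def b_def by (auto simp: min_def)
    have cx[measurable]: "(\<lambda>y. c (x, y)) \<in> borel_measurable M2" using x by measurable
    have "G x = ennreal (D x) * (\<integral>\<^sup>+y. ennreal (max (h x + g2 y - c (x, y)) 0 powr (q - 1)) \<partial>M2)"
      unfolding G_def using Dnn[of x]
      by (subst nn_integral_cmult[symmetric]) (auto simp: v_def bh ennreal_mult intro!: nn_integral_cong)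
    also have "\<dots> > ennreal (D x) * ennreal (\<gamma> * \<mu> x)"
      using strict[OF x] Dp by (intro ennreal_mult_strict_left_mono) auto
    finally have lt: "ennreal (D x) * ennreal (\<gamma> * \<mu> x) < G x" .
    have "f x \<le> ennreal (D x) * ennreal (\<gamma> * \<mu> x)"
    proof (cases "0 \<le> \<gamma> * \<mu> x")
      case True
      have e1: "ennreal (D x) * ennreal (\<gamma> * \<mu> x) = ennreal (D x * (\<gamma> * \<mu> x))"
        by (rule ennreal_mult[symmetric]) (use Dnn[of x] True in auto)
      have e2: "D x * (\<gamma> * \<mu> x) = \<gamma> * D x * \<mu> x" by simp
      show ?thesis unfolding f_def e1 e2 by simp
    next
      case False
      have "D x * (\<gamma> * \<mu> x) \<le> 0" using Dp False by (meson less_eq_real_def mult_nonneg_nonpos not_le)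
      then have "\<gamma> * D x * \<mu> x \<le> 0" by (simp add: mult.commute mult.left_commute)
      then show ?thesis unfolding f_def by (simp add: ennreal_neg)
    qed
    then show ?thesis using lt by (auto intro: le_less_trans)
  qed
  have AEGf: "AE x in M1. G x \<le> f x"
  proof (rule ccontr)
    assume "\<not> (AE x in M1. G x \<le> f x)"
    then have "(\<integral>\<^sup>+x. f x \<partial>M1) < (\<integral>\<^sup>+x. G x \<partial>M1)"
      using fG ffin by (intro nn_integral_less) (auto intro: AE_I2)
    then show False using Gf by simp
  qed
  have "AE x in M1. g1 x \<le> h x"
    using AEGf AE_space
  proof eventually_elim
    case (elim x)
    then have "\<not> 0 < D x" using fG[of x] by auto
    then show ?case unfolding D_def b_def by (cases "g1 x \<le> h x") (auto simp: min_def)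
  qed
  then show ?thesis unfolding h_def by (intro exI[of _ "K + \<bar>C\<bar> + 1"]) (simp add: add.assoc)
qed


lemma core_result: "integrable M1 (\<lambda>x. \<bar>g1 x\<bar> powr q)"
proof -
  obtain L where L: "AE x in M1. -L \<le> g1 x" using lower by blast
  obtain K where K: "AE x in M1. g1 x \<le> K + tt x" using upper by blast
  define A where "A = 2 * \<gamma> / measure M2 (space M2)"
  have A0: "0 \<le> A" unfolding A_def using gam m2pos by simp
  define B where "B = \<bar>L\<bar> + \<bar>K\<bar>"
  show ?thesis
  proof (rule Bochner_Integration.integrable_bound)
    show "integrable M1 (\<lambda>x. 2 powr q * (B powr q + A powr p * \<bar>\<mu> x\<bar> powr p))"
      using mup by auto
    show "AE x in M1. norm (\<bar>g1 x\<bar> powr q) \<le> norm (2 powr q * (B powr q + A powr p * \<bar>\<mu> x\<bar> powr p))"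
      using L K
    proof eventually_elim
      case (elim x)
      have "\<bar>g1 x\<bar> \<le> B + tt x" using elim tt_nn[of x] unfolding B_def by auto
      then have "\<bar>g1 x\<bar> powr q \<le> (B + tt x) powr q" using q1 by (intro powr_mono2) auto
      also have "\<dots> \<le> 2 powr q * (B powr q + tt x powr q)"
        using q1 tt_nn[of x] unfolding B_def by (intro powr_sum_le) auto
      also have "tt x powr q = (A * max (\<mu> x) 0) powr p"
        unfolding tt_def A_def[symmetric] powr_powr pq_rel(2) ..
      also have "\<dots> = A powr p * max (\<mu> x) 0 powr p" using A0 by (simp add: powr_mult)
      also have "\<dots> \<le> A powr p * \<bar>\<mu> x\<bar> powr p"
        using p1 by (intro mult_left_mono powr_mono2) auto
      finally have "\<bar>g1 x\<bar> powr q \<le> 2 powr q * (B powr q + A powr p * \<bar>\<mu> x\<bar> powr p)"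
        by (simp add: mult_left_mono)
      then show ?case by simp
    qed
  qed simp
qed

end


lemma T_AE:
  fixes S :: "'c::euclidean_space set"
  assumes S: "S \<in> sets borel"
  shows "(AE x in lebesgue_on S. P x) \<longleftrightarrow> (AE x in density lborel (indicator S). P x)"
proof -
  have "(AE x in lebesgue_on S. P x) \<longleftrightarrow> (AE x in lebesgue. x \<in> S \<longrightarrow> P x)"
    using S by (intro AE_restrict_space_iff) auto
  also have "\<dots> \<longleftrightarrow> (AE x in lborel. x \<in> S \<longrightarrow> P x)" by (rule AE_completion_iff)
  also have "\<dots> \<longleftrightarrow> (AE x in density lborel (indicator S). P x)"
    using S by (subst AE_density) (auto simp: indicator_def)
  finally show ?thesis .
qed

lemma T_int:
  fixes S :: "'c::euclidean_space set" and f :: "'c \<Rightarrow> real"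
  assumes S: "S \<in> sets borel" and f: "f \<in> borel_measurable borel"
  shows "integrable (lebesgue_on S) f \<longleftrightarrow> integrable (density lborel (indicator S)) f"
    and "integral\<^sup>L (lebesgue_on S) f = integral\<^sup>L (density lborel (indicator S)) f"
proof -
  have fl[measurable]: "f \<in> borel_measurable lborel" using f by simp
  have fi[measurable]: "(\<lambda>x. indicator S x *\<^sub>R f x) \<in> borel_measurable lborel" using S by measurable
  have d: "density lborel (indicator S) = density lborel (\<lambda>x. ennreal (indicator S x))"
    by (simp add: ennreal_indicator)
  have "integrable (lebesgue_on S) f \<longleftrightarrow> integrable lebesgue (\<lambda>x. indicator S x *\<^sub>R f x)"
    using S by (intro integrable_restrict_space) auto
  also have "\<dots> \<longleftrightarrow> integrable lborel (\<lambda>x. indicator S x *\<^sub>R f x)"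
    by (rule integrable_completion) measurable
  also have "\<dots> \<longleftrightarrow> integrable (density lborel (indicator S)) f"
    unfolding d using S by (subst integrable_density) auto
  finally show "integrable (lebesgue_on S) f \<longleftrightarrow> integrable (density lborel (indicator S)) f" .
  have "integral\<^sup>L (lebesgue_on S) f = integral\<^sup>L lebesgue (\<lambda>x. indicator S x *\<^sub>R f x)"
    using S by (intro integral_restrict_space) auto
  also have "\<dots> = integral\<^sup>L lborel (\<lambda>x. indicator S x *\<^sub>R f x)"
    by (rule integral_completion) measurable
  also have "\<dots> = integral\<^sup>L (density lborel (indicator S)) f"
    unfolding d using S by (subst integral_density) auto
  finally show "integral\<^sup>L (lebesgue_on S) f = integral\<^sup>L (density lborel (indicator S)) f" .
qed

lemma T_fin:
  fixes S :: "'c::euclidean_space set"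
  assumes "compact S"
  shows "finite_measure (density lborel (indicator S))"
proof (rule finite_measureI)
  have S: "S \<in> sets borel" using assms by (simp add: compact_imp_closed)
  have "emeasure (density lborel (indicator S)) (space (density lborel (indicator S))) = emeasure lborel S"
    using S by (simp add: emeasure_density nn_integral_indicator)
  then show "emeasure (density lborel (indicator S)) (space (density lborel (indicator S))) \<noteq> \<infinity>"
    using emeasure_compact_finite[OF assms] by simp
qed

lemma T_prod:
  fixes S1 S2 :: "'c::euclidean_space set"
  assumes "compact S1" "compact S2"
  shows "density lborel (indicator S1) \<Otimes>\<^sub>M density lborel (indicator S2) = density lborel (indicator (S1 \<times> S2))"
proof -
  have S: "S1 \<in> sets borel" "S2 \<in> sets borel" using assms by (simp_all add: compact_imp_closed)
  interpret F2: finite_measure "density lborel (indicator S2)" using T_fin assms(2) .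
  have "density lborel (indicator S1) \<Otimes>\<^sub>M density lborel (indicator S2)
      = density (lborel \<Otimes>\<^sub>M lborel) (\<lambda>(x, y). indicator S1 x * indicator S2 y)"
    using S by (intro pair_measure_density) (auto simp: lborel.sigma_finite_measure_axioms
        F2.sigma_finite_measure_axioms)
  also have "\<dots> = density lborel (indicator (S1 \<times> S2))"
  proof -
    have e: "(\<lambda>(x, y). indicator S1 x * indicator S2 y :: ennreal) = indicator (S1 \<times> S2)"
      by (auto simp: fun_eq_iff indicator_def)
    show ?thesis by (simp only: e lborel_prod)
  qed
  finally show ?thesis .
qed

lemma T_AE_fst:
  assumes "AE x in lborel. P x"
  shows "AE z in (lborel :: ('c::euclidean_space \<times> 'd::euclidean_space) measure). P (fst z)"
proof -
  obtain N where N: "{x \<in> space lborel. \<not> P x} \<subseteq> N" "emeasure lborel N = 0" and Ns: "N \<in> sets lborel"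
    using assms by (rule AE_E)
  have e: "emeasure (lborel \<Otimes>\<^sub>M (lborel :: 'd measure)) (N \<times> UNIV) = emeasure lborel N * emeasure lborel (UNIV :: 'd set)"
    by (rule lborel.emeasure_pair_measure_Times) (use Ns in simp_all)
  have "N \<times> UNIV \<in> null_sets (lborel \<Otimes>\<^sub>M (lborel :: 'd measure))"
    unfolding null_sets_def using Ns N(2) e by (auto intro!: pair_measureI)
  moreover have "{z \<in> space (lborel \<Otimes>\<^sub>M (lborel :: 'd measure)). \<not> P (fst z)} \<subseteq> N \<times> UNIV"
    using N(1) by (auto simp: space_pair_measure)
  ultimately have "AE z in (lborel \<Otimes>\<^sub>M (lborel :: 'd measure)). P (fst z)"
    by (intro AE_I') 
  then show ?thesis by (simp only: lborel_prod)
qed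

lemma T_AE_snd:
  assumes "AE x in lborel. P x"
  shows "AE z in (lborel :: ('c::euclidean_space \<times> 'd::euclidean_space) measure). P (snd z)"
proof -
  obtain N where N: "{x \<in> space lborel. \<not> P x} \<subseteq> N" "emeasure lborel N = 0" and Ns: "N \<in> sets lborel"
    using assms by (rule AE_E)
  have e: "emeasure ((lborel :: 'c measure) \<Otimes>\<^sub>M lborel) (UNIV \<times> N) = emeasure lborel (UNIV :: 'c set) * emeasure lborel N"
    by (rule lborel.emeasure_pair_measure_Times) (use Ns in simp_all)
  have "UNIV \<times> N \<in> null_sets ((lborel :: 'c measure) \<Otimes>\<^sub>M lborel)"
    unfolding null_sets_def using Ns N(2) e by (auto intro!: pair_measureI)
  moreover have "{z \<in> space ((lborel :: 'c measure) \<Otimes>\<^sub>M lborel). \<not> P (snd z)} \<subseteq> UNIV \<times> N"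
    using N(1) by (auto simp: space_pair_measure)
  ultimately have "AE z in ((lborel :: 'c measure) \<Otimes>\<^sub>M lborel). P (snd z)"
    by (intro AE_I') 
  then show ?thesis by (simp only: lborel_prod)
qed

lemma T_borel_version:
  fixes S :: "'c::euclidean_space set" and f :: "'c \<Rightarrow> real"
  assumes S: "S \<in> sets borel" and f: "f \<in> borel_measurable (lebesgue_on S)"
  shows "\<exists>g \<in> borel_measurable borel. AE x in lborel. x \<in> S \<longrightarrow> f x = g x"
proof -
  have "(\<lambda>x. indicator S x *\<^sub>R f x) \<in> borel_measurable lebesgue"
    using f S by (subst borel_measurable_restrict_space_iff[symmetric]) auto
  then obtain g where g: "g \<in> borel_measurable lborel" "AE x in lborel. indicator S x *\<^sub>R f x = g x"
    using completion_ex_borel_measurable_real by blast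
  from g(2) have "AE x in lborel. x \<in> S \<longrightarrow> f x = g x" by eventually_elim auto
  moreover have "g \<in> borel_measurable borel" using g(1) by simp
  ultimately show ?thesis by blast
qed


lemma T_AE':
  fixes S :: "'c::euclidean_space set"
  assumes S: "S \<in> sets borel"
  shows "(AE x in lebesgue_on S. P x) \<longleftrightarrow> (AE x in lborel. x \<in> S \<longrightarrow> P x)"
proof -
  have "(AE x in lebesgue_on S. P x) \<longleftrightarrow> (AE x in lebesgue. x \<in> S \<longrightarrow> P x)"
    using S by (intro AE_restrict_space_iff) auto
  also have "\<dots> \<longleftrightarrow> (AE x in lborel. x \<in> S \<longrightarrow> P x)" by (rule AE_completion_iff)
  finally show ?thesis .
qed

lemma borel_to_leb:
  fixes f :: "'c::euclidean_space \<Rightarrow> real"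
  assumes "f \<in> borel_measurable borel"
  shows "f \<in> borel_measurable (lebesgue_on S)"
  by (rule measurable_restrict_space1, rule measurable_completion) (use assms in simp)

lemma borel_fst[measurable]:
  fixes f :: "'c::euclidean_space \<Rightarrow> real"
  assumes "f \<in> borel_measurable borel"
  shows "(\<lambda>z. f (fst z)) \<in> borel_measurable (borel :: ('c \<times> 'd::euclidean_space) measure)"
  using measurable_compose[OF measurable_fst[of borel "borel :: 'd measure"] assms]
  by (simp add: borel_prod)

lemma borel_snd[measurable]:
  fixes f :: "'d::euclidean_space \<Rightarrow> real"
  assumes "f \<in> borel_measurable borel"
  shows "(\<lambda>z. f (snd z)) \<in> borel_measurable (borel :: ('c::euclidean_space \<times> 'd) measure)"
  using measurable_compose[OF measurable_snd[of "borel :: 'c measure" borel] assms]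
  by (simp add: borel_prod)

lemma leb_transfer:
  fixes S :: "'c::euclidean_space set" and f g :: "'c \<Rightarrow> real"
  assumes S: "S \<in> sets borel" and f: "f \<in> borel_measurable (lebesgue_on S)"
    and g: "g \<in> borel_measurable borel" and e: "AE x in lborel. x \<in> S \<longrightarrow> f x = g x"
  shows "integrable (lebesgue_on S) f \<longleftrightarrow> integrable (density lborel (indicator S)) g"
    and "integral\<^sup>L (lebesgue_on S) f = integral\<^sup>L (density lborel (indicator S)) g"
proof -
  have ae: "AE x in lebesgue_on S. f x = g x" using e S by (simp add: T_AE')
  have gl: "g \<in> borel_measurable (lebesgue_on S)" using g by (rule borel_to_leb)
  have "integrable (lebesgue_on S) f \<longleftrightarrow> integrable (lebesgue_on S) g"
    using f gl ae by (rule integrable_cong_AE)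
  then show "integrable (lebesgue_on S) f \<longleftrightarrow> integrable (density lborel (indicator S)) g"
    using T_int(1)[OF S g] by simp
  have "integral\<^sup>L (lebesgue_on S) f = integral\<^sup>L (lebesgue_on S) g"
    using f gl ae by (rule integral_cong_AE)
  then show "integral\<^sup>L (lebesgue_on S) f = integral\<^sup>L (density lborel (indicator S)) g"
    using T_int(2)[OF S g] by simp
qed

locale conc =
  fixes \<Omega>1 \<Omega>2 :: "'a::euclidean_space set"
    and c :: "'a \<times> 'a \<Rightarrow> real"
    and \<gamma> p q \<delta> :: real
    and \<mu>1 \<mu>2 a1 a2 g1 g2 m1 m2 :: "'a \<Rightarrow> real"
    and cc :: "'a \<times> 'a \<Rightarrow> real" and C0 C :: real
  assumes cpt1: "compact \<Omega>1" and cpt2: "compact \<Omega>2"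
    and cont: "continuous_on (\<Omega>1 \<times> \<Omega>2) c"
    and gam: "\<gamma> > 0"
    and p1: "p > 1" and pq: "1 / p + 1 / q = 1" and q1: "1 < q" and q2: "q \<le> 2"
    and del: "\<delta> > 0"
    and mu1: "\<mu>1 \<in> Lp_on p \<Omega>1" and mu2: "\<mu>2 \<in> Lp_on p \<Omega>2"
    and mud1: "AE x in lebesgue_on \<Omega>1. \<mu>1 x \<ge> \<delta>"
    and mud2: "AE x in lebesgue_on \<Omega>2. \<mu>2 x \<ge> \<delta>"
    and int2: "(\<integral>x. \<mu>2 x \<partial>lebesgue_on \<Omega>2) = 1"
    and int1: "(\<integral>x. \<mu>1 x \<partial>lebesgue_on \<Omega>1) = 1"
    and mini: "is_minimizer c \<gamma> q \<mu>1 \<mu>2 \<Omega>1 \<Omega>2 a1 a2"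
    and g1b[measurable]: "g1 \<in> borel_measurable borel" and g1e: "AE x in lborel. x \<in> \<Omega>1 \<longrightarrow> a1 x = g1 x"
    and g2b[measurable]: "g2 \<in> borel_measurable borel" and g2e: "AE x in lborel. x \<in> \<Omega>2 \<longrightarrow> a2 x = g2 x"
    and m1b[measurable]: "m1 \<in> borel_measurable borel" and m1e: "AE x in lborel. x \<in> \<Omega>1 \<longrightarrow> \<mu>1 x = m1 x"
    and m2b[measurable]: "m2 \<in> borel_measurable borel" and m2e: "AE x in lborel. x \<in> \<Omega>2 \<longrightarrow> \<mu>2 x = m2 x"
    and ccdef: "cc = (\<lambda>z. indicator (\<Omega>1 \<times> \<Omega>2) z * c z)"
    and ccb: "\<And>z. C0 \<le> cc z \<and> cc z \<le> C"
begin

abbreviation "M1 \<equiv> density lborel (indicator \<Omega>1) :: 'a measure"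
abbreviation "M2 \<equiv> density lborel (indicator \<Omega>2) :: 'a measure"
abbreviation "NN \<equiv> M1 \<Otimes>\<^sub>M M2"

lemma S1[measurable]: "\<Omega>1 \<in> sets borel" using cpt1 by (simp add: compact_imp_closed)
lemma S2[measurable]: "\<Omega>2 \<in> sets borel" using cpt2 by (simp add: compact_imp_closed)
lemma S12[measurable]: "\<Omega>1 \<times> \<Omega>2 \<in> sets borel" using cpt1 cpt2 by (simp add: compact_imp_closed compact_Times)

lemma fin1: "finite_measure M1" using T_fin[OF cpt1] .
lemma fin2: "finite_measure M2" using T_fin[OF cpt2] .
lemma NN_eq: "NN = density lborel (indicator (\<Omega>1 \<times> \<Omega>2))" using T_prod[OF cpt1 cpt2] .

lemma ccm[measurable]: "cc \<in> borel_measurable borel"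
proof -
  have "(\<lambda>z. indicator (\<Omega>1 \<times> \<Omega>2) z *\<^sub>R c z) \<in> borel_measurable borel"
    by (rule borel_measurable_continuous_on_indicator[OF S12 cont])
  then show ?thesis unfolding ccdef by simp
qed

lemma meas_M1: "measurable M1 (borel :: real measure) = measurable borel borel"
  by (rule measurable_cong_sets) auto
lemma meas_M2: "measurable M2 (borel :: real measure) = measurable borel borel"
  by (rule measurable_cong_sets) auto
lemma meas_NN: "measurable NN (borel :: real measure) = measurable borel borel"
  unfolding NN_eq by (rule measurable_cong_sets) auto


lemma mu1m: "\<mu>1 \<in> borel_measurable (lebesgue_on \<Omega>1)" using mu1 by (simp add: Lp_on_def)
lemma mu2m: "\<mu>2 \<in> borel_measurable (lebesgue_on \<Omega>2)" using mu2 by (simp add: Lp_on_def)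

lemma phi_transfer:
  assumes b1[measurable]: "b1 \<in> borel_measurable borel" and b2[measurable]: "b2 \<in> borel_measurable borel"
  shows "integrable (lebesgue_on (\<Omega>1 \<times> \<Omega>2)) (\<lambda>z. max (osum b1 b2 z - c z) 0 powr q)
     \<longleftrightarrow> integrable NN (\<lambda>z. max (b1 (fst z) + b2 (snd z) - cc z) 0 powr q)"
    and "(\<integral>z. max (osum b1 b2 z - c z) 0 powr q \<partial>lebesgue_on (\<Omega>1 \<times> \<Omega>2))
     = (\<integral>z. max (b1 (fst z) + b2 (snd z) - cc z) 0 powr q \<partial>NN)"
proof -
  define F where "F z = max (b1 (fst z) + b2 (snd z) - cc z) 0 powr q" for z
  have Fm: "F \<in> borel_measurable borel" unfolding F_def by measurable
  have eq: "max (osum b1 b2 z - c z) 0 powr q = F z" if "z \<in> space (lebesgue_on (\<Omega>1 \<times> \<Omega>2))" for z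
    using that unfolding F_def osum_def ccdef by (auto simp: split_beta)
  have "integrable (lebesgue_on (\<Omega>1 \<times> \<Omega>2)) (\<lambda>z. max (osum b1 b2 z - c z) 0 powr q)
     \<longleftrightarrow> integrable (lebesgue_on (\<Omega>1 \<times> \<Omega>2)) F"
    using eq by (intro Bochner_Integration.integrable_cong) auto
  also have "\<dots> \<longleftrightarrow> integrable NN F" unfolding NN_eq by (rule T_int(1)[OF S12 Fm])
  finally show "integrable (lebesgue_on (\<Omega>1 \<times> \<Omega>2)) (\<lambda>z. max (osum b1 b2 z - c z) 0 powr q)
     \<longleftrightarrow> integrable NN (\<lambda>z. max (b1 (fst z) + b2 (snd z) - cc z) 0 powr q)" unfolding F_def .
  have "(\<integral>z. max (osum b1 b2 z - c z) 0 powr q \<partial>lebesgue_on (\<Omega>1 \<times> \<Omega>2))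
     = (\<integral>z. F z \<partial>lebesgue_on (\<Omega>1 \<times> \<Omega>2))"
    using eq by (intro Bochner_Integration.integral_cong) auto
  also have "\<dots> = (\<integral>z. F z \<partial>NN)" unfolding NN_eq by (rule T_int(2)[OF S12 Fm])
  finally show "(\<integral>z. max (osum b1 b2 z - c z) 0 powr q \<partial>lebesgue_on (\<Omega>1 \<times> \<Omega>2))
     = (\<integral>z. max (b1 (fst z) + b2 (snd z) - cc z) 0 powr q \<partial>NN)" unfolding F_def .
qed

lemma AEa: "AE z in lebesgue_on (\<Omega>1 \<times> \<Omega>2). osum a1 a2 z = osum g1 g2 z"
proof -
  have "AE z in (lborel :: ('a \<times> 'a) measure). fst z \<in> \<Omega>1 \<longrightarrow> a1 (fst z) = g1 (fst z)"
    by (rule T_AE_fst[OF g1e])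
  moreover have "AE z in (lborel :: ('a \<times> 'a) measure). snd z \<in> \<Omega>2 \<longrightarrow> a2 (snd z) = g2 (snd z)"
    by (rule T_AE_snd[OF g2e])
  ultimately have "AE z in lborel. z \<in> \<Omega>1 \<times> \<Omega>2 \<longrightarrow> osum a1 a2 z = osum g1 g2 z"
    by eventually_elim (auto simp: osum_def split_beta)
  then show ?thesis by (simp add: T_AE'[OF S12])
qed


definition EE :: "('a \<Rightarrow> real) \<Rightarrow> ('a \<Rightarrow> real) \<Rightarrow> real" where
  "EE b1 b2 = (1/q) * (\<integral>z. max (b1 (fst z) + b2 (snd z) - cc z) 0 powr q \<partial>NN)
     - \<gamma> powr (q - 1) * (\<integral>x. b1 x * m1 x \<partial>M1) - \<gamma> powr (q - 1) * (\<integral>x. b2 x * m2 x \<partial>M2)"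

lemma osum_borel[measurable]:
  fixes b1 b2 :: "'a \<Rightarrow> real"
  assumes [measurable]: "b1 \<in> borel_measurable borel" "b2 \<in> borel_measurable borel"
  shows "osum b1 b2 \<in> borel_measurable borel"
proof -
  have "osum b1 b2 = (\<lambda>z. b1 (fst z) + b2 (snd z))" unfolding osum_def by (auto simp: split_beta)
  moreover have "(\<lambda>z. b1 (fst z) + b2 (snd z)) \<in> borel_measurable (borel :: ('a \<times> 'a) measure)" by measurable
  ultimately show ?thesis by simp
qed

lemma c_leb[measurable]: "c \<in> borel_measurable (lebesgue_on (\<Omega>1 \<times> \<Omega>2))"
  using cont by (rule continuous_imp_measurable_on_sets_lebesgue) (use S12 in simp)

lemma eval:
  fixes b1 b2 :: "'a \<Rightarrow> real"
  assumes b1[measurable]: "b1 \<in> borel_measurable borel" and b2[measurable]: "b2 \<in> borel_measurable borel"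
    and i1: "integrable M1 b1" and i2: "integrable M2 b2"
    and im1: "integrable M1 (\<lambda>x. b1 x * m1 x)" and im2: "integrable M2 (\<lambda>x. b2 x * m2 x)"
    and ip: "integrable NN (\<lambda>z. max (b1 (fst z) + b2 (snd z) - cc z) 0 powr q)"
  shows "feasible c \<gamma> q \<mu>1 \<mu>2 \<Omega>1 \<Omega>2 b1 b2 \<and> Lambda c \<gamma> q \<mu>1 \<mu>2 \<Omega>1 \<Omega>2 b1 b2 = EE b1 b2"
proof -
  have l1: "integrable (lebesgue_on \<Omega>1) b1" using i1 T_int(1)[OF S1 b1] by simp
  have l2: "integrable (lebesgue_on \<Omega>2) b2" using i2 T_int(1)[OF S2 b2] by simp
  have b1l[measurable]: "b1 \<in> borel_measurable (lebesgue_on \<Omega>1)" by (rule borel_to_leb[OF b1])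
  have b2l[measurable]: "b2 \<in> borel_measurable (lebesgue_on \<Omega>2)" by (rule borel_to_leb[OF b2])
  have mu1l[measurable]: "\<mu>1 \<in> borel_measurable (lebesgue_on \<Omega>1)" by (rule mu1m)
  have mu2l[measurable]: "\<mu>2 \<in> borel_measurable (lebesgue_on \<Omega>2)" by (rule mu2m)
  have e1: "AE x in lborel. x \<in> \<Omega>1 \<longrightarrow> b1 x * \<mu>1 x = b1 x * m1 x" using m1e by eventually_elim auto
  have e2: "AE x in lborel. x \<in> \<Omega>2 \<longrightarrow> b2 x * \<mu>2 x = b2 x * m2 x" using m2e by eventually_elim auto
  have t1: "integrable (lebesgue_on \<Omega>1) (\<lambda>x. b1 x * \<mu>1 x) \<longleftrightarrow> integrable M1 (\<lambda>x. b1 x * m1 x)"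
     "(\<integral>x. b1 x * \<mu>1 x \<partial>lebesgue_on \<Omega>1) = (\<integral>x. b1 x * m1 x \<partial>M1)"
    by (rule leb_transfer[OF S1 _ _ e1], measurable)+
  have t2: "integrable (lebesgue_on \<Omega>2) (\<lambda>x. b2 x * \<mu>2 x) \<longleftrightarrow> integrable M2 (\<lambda>x. b2 x * m2 x)"
     "(\<integral>x. b2 x * \<mu>2 x \<partial>lebesgue_on \<Omega>2) = (\<integral>x. b2 x * m2 x \<partial>M2)"
    by (rule leb_transfer[OF S2 _ _ e2], measurable)+
  have os[measurable]: "osum b1 b2 \<in> borel_measurable (lebesgue_on (\<Omega>1 \<times> \<Omega>2))"
    by (rule borel_to_leb) measurable
  have pl: "integrable (lebesgue_on (\<Omega>1 \<times> \<Omega>2)) (\<lambda>z. max (osum b1 b2 z - c z) 0 powr q)"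
    using phi_transfer(1)[OF b1 b2] ip by simp
  have pw: "\<bar>max (osum b1 b2 z - c z) 0 / \<gamma>\<bar> powr q = max (osum b1 b2 z - c z) 0 powr q / \<gamma> powr q" for z
    using gam by (simp add: powr_divide)
  have Lp: "(\<lambda>z. max (osum b1 b2 z - c z) 0 / \<gamma>) \<in> Lp_on q (\<Omega>1 \<times> \<Omega>2)"
  proof -
    have "integrable (lebesgue_on (\<Omega>1 \<times> \<Omega>2)) (\<lambda>z. max (osum b1 b2 z - c z) 0 powr q / \<gamma> powr q)"
      using pl by (rule integrable_divide_zero)
    then have "integrable (lebesgue_on (\<Omega>1 \<times> \<Omega>2)) (\<lambda>z. \<bar>max (osum b1 b2 z - c z) 0 / \<gamma>\<bar> powr q)"
      by (simp only: pw)
    moreover have "(\<lambda>z. max (osum b1 b2 z - c z) 0 / \<gamma>) \<in> borel_measurable (lebesgue_on (\<Omega>1 \<times> \<Omega>2))"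
      by measurable
    ultimately show ?thesis unfolding Lp_on_def by simp
  qed
  have feas: "feasible c \<gamma> q \<mu>1 \<mu>2 \<Omega>1 \<Omega>2 b1 b2"
    unfolding feasible_def using l1 l2 Lp t1 t2 im1 im2 by simp
  have "Lambda c \<gamma> q \<mu>1 \<mu>2 \<Omega>1 \<Omega>2 b1 b2 = EE b1 b2"
    unfolding Lambda_def EE_def phi_transfer(2)[OF b1 b2] t1(2) t2(2) ..
  with feas show ?thesis by simp
qed


lemma a_facts:
  shows "integrable M1 g1" "integrable M2 g2"
    "integrable M1 (\<lambda>x. g1 x * m1 x)" "integrable M2 (\<lambda>x. g2 x * m2 x)"
    "integrable NN (\<lambda>z. max (g1 (fst z) + g2 (snd z) - cc z) 0 powr q)"
    "Lambda c \<gamma> q \<mu>1 \<mu>2 \<Omega>1 \<Omega>2 a1 a2 = EE g1 g2"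
proof -
  have feas: "feasible c \<gamma> q \<mu>1 \<mu>2 \<Omega>1 \<Omega>2 a1 a2" using mini by (simp add: is_minimizer_def)
  then have ia1: "integrable (lebesgue_on \<Omega>1) a1" and ia2: "integrable (lebesgue_on \<Omega>2) a2"
    and iam1: "integrable (lebesgue_on \<Omega>1) (\<lambda>x. a1 x * \<mu>1 x)"
    and iam2: "integrable (lebesgue_on \<Omega>2) (\<lambda>x. a2 x * \<mu>2 x)"
    and Lp: "(\<lambda>z. max (osum a1 a2 z - c z) 0 / \<gamma>) \<in> Lp_on q (\<Omega>1 \<times> \<Omega>2)"
    by (simp_all add: feasible_def)
  have a1m[measurable]: "a1 \<in> borel_measurable (lebesgue_on \<Omega>1)" using ia1 by auto
  have a2m[measurable]: "a2 \<in> borel_measurable (lebesgue_on \<Omega>2)" using ia2 by auto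
  have mu1l[measurable]: "\<mu>1 \<in> borel_measurable (lebesgue_on \<Omega>1)" by (rule mu1m)
  have mu2l[measurable]: "\<mu>2 \<in> borel_measurable (lebesgue_on \<Omega>2)" by (rule mu2m)
  show "integrable M1 g1" using leb_transfer(1)[OF S1 a1m g1b g1e] ia1 by simp
  show "integrable M2 g2" using leb_transfer(1)[OF S2 a2m g2b g2e] ia2 by simp
  have e1: "AE x in lborel. x \<in> \<Omega>1 \<longrightarrow> a1 x * \<mu>1 x = g1 x * m1 x" using g1e m1e by eventually_elim auto
  have e2: "AE x in lborel. x \<in> \<Omega>2 \<longrightarrow> a2 x * \<mu>2 x = g2 x * m2 x" using g2e m2e by eventually_elim auto
  have t1: "integrable (lebesgue_on \<Omega>1) (\<lambda>x. a1 x * \<mu>1 x) \<longleftrightarrow> integrable M1 (\<lambda>x. g1 x * m1 x)"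
     "(\<integral>x. a1 x * \<mu>1 x \<partial>lebesgue_on \<Omega>1) = (\<integral>x. g1 x * m1 x \<partial>M1)"
    by (rule leb_transfer[OF S1 _ _ e1], measurable)+
  have t2: "integrable (lebesgue_on \<Omega>2) (\<lambda>x. a2 x * \<mu>2 x) \<longleftrightarrow> integrable M2 (\<lambda>x. g2 x * m2 x)"
     "(\<integral>x. a2 x * \<mu>2 x \<partial>lebesgue_on \<Omega>2) = (\<integral>x. g2 x * m2 x \<partial>M2)"
    by (rule leb_transfer[OF S2 _ _ e2], measurable)+
  show "integrable M1 (\<lambda>x. g1 x * m1 x)" using t1 iam1 by simp
  show "integrable M2 (\<lambda>x. g2 x * m2 x)" using t2 iam2 by simp
  define h where "h = (\<lambda>z. max (osum a1 a2 z - c z) 0 / \<gamma>)"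
  have hL: "h \<in> Lp_on q (\<Omega>1 \<times> \<Omega>2)" using Lp unfolding h_def .
  have hm: "h \<in> borel_measurable (lebesgue_on (\<Omega>1 \<times> \<Omega>2))" and hi: "integrable (lebesgue_on (\<Omega>1 \<times> \<Omega>2)) (\<lambda>z. \<bar>h z\<bar> powr q)"
    using hL unfolding Lp_on_def by simp_all
  have Fe: "max (osum a1 a2 z - c z) 0 powr q = \<gamma> powr q * \<bar>h z\<bar> powr q" for z
  proof -
    have h0: "0 \<le> h z" unfolding h_def using gam by simp
    have "\<gamma> * h z = max (osum a1 a2 z - c z) 0" unfolding h_def using gam by simp
    then have "max (osum a1 a2 z - c z) 0 powr q = (\<gamma> * h z) powr q" by simp
    also have "\<dots> = \<gamma> powr q * h z powr q" using gam h0 by (intro powr_mult)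
    finally show ?thesis using h0 by simp
  qed
  have Fm: "(\<lambda>z. max (osum a1 a2 z - c z) 0 powr q) \<in> borel_measurable (lebesgue_on (\<Omega>1 \<times> \<Omega>2))"
    unfolding Fe using hm by measurable
  have Fi: "integrable (lebesgue_on (\<Omega>1 \<times> \<Omega>2)) (\<lambda>z. max (osum a1 a2 z - c z) 0 powr q)"
    unfolding Fe using hi by (rule integrable_mult_right)
  have Gm: "(\<lambda>z. max (osum g1 g2 z - c z) 0 powr q) \<in> borel_measurable (lebesgue_on (\<Omega>1 \<times> \<Omega>2))"
  proof -
    have [measurable]: "osum g1 g2 \<in> borel_measurable (lebesgue_on (\<Omega>1 \<times> \<Omega>2))"
      by (rule borel_to_leb) measurable
    show ?thesis by measurable
  qed
  have FG: "AE z in lebesgue_on (\<Omega>1 \<times> \<Omega>2). max (osum a1 a2 z - c z) 0 powr q = max (osum g1 g2 z - c z) 0 powr q"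
    using AEa by eventually_elim simp
  have Gi: "integrable (lebesgue_on (\<Omega>1 \<times> \<Omega>2)) (\<lambda>z. max (osum g1 g2 z - c z) 0 powr q)"
    using Fi integrable_cong_AE[OF Fm Gm FG] by simp
  show "integrable NN (\<lambda>z. max (g1 (fst z) + g2 (snd z) - cc z) 0 powr q)"
    using Gi phi_transfer(1)[OF g1b g2b] by simp
  have "(\<integral>z. max (osum a1 a2 z - c z) 0 powr q \<partial>lebesgue_on (\<Omega>1 \<times> \<Omega>2))
      = (\<integral>z. max (osum g1 g2 z - c z) 0 powr q \<partial>lebesgue_on (\<Omega>1 \<times> \<Omega>2))"
    by (rule integral_cong_AE[OF Fm Gm FG])
  also have "\<dots> = (\<integral>z. max (g1 (fst z) + g2 (snd z) - cc z) 0 powr q \<partial>NN)"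
    by (rule phi_transfer(2)[OF g1b g2b])
  finally have PI: "(\<integral>z. max (osum a1 a2 z - c z) 0 powr q \<partial>lebesgue_on (\<Omega>1 \<times> \<Omega>2))
      = (\<integral>z. max (g1 (fst z) + g2 (snd z) - cc z) 0 powr q \<partial>NN)" .
  show "Lambda c \<gamma> q \<mu>1 \<mu>2 \<Omega>1 \<Omega>2 a1 a2 = EE g1 g2"
    unfolding Lambda_def EE_def PI t1(2) t2(2) ..
qed

lemma EE_min:
  fixes b1 b2 :: "'a \<Rightarrow> real"
  assumes "b1 \<in> borel_measurable borel" "b2 \<in> borel_measurable borel"
    and "integrable M1 b1" "integrable M2 b2"
    and "integrable M1 (\<lambda>x. b1 x * m1 x)" "integrable M2 (\<lambda>x. b2 x * m2 x)"
    and "integrable NN (\<lambda>z. max (b1 (fst z) + b2 (snd z) - cc z) 0 powr q)"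
  shows "EE g1 g2 \<le> EE b1 b2"
proof -
  have e: "feasible c \<gamma> q \<mu>1 \<mu>2 \<Omega>1 \<Omega>2 b1 b2 \<and> Lambda c \<gamma> q \<mu>1 \<mu>2 \<Omega>1 \<Omega>2 b1 b2 = EE b1 b2"
    using eval[OF assms] .
  then have "Lambda c \<gamma> q \<mu>1 \<mu>2 \<Omega>1 \<Omega>2 a1 a2 \<le> Lambda c \<gamma> q \<mu>1 \<mu>2 \<Omega>1 \<Omega>2 b1 b2"
    using mini e unfolding is_minimizer_def by blast
  then show ?thesis using e a_facts(6) by simp
qed


lemma swap_transfer:
  fixes F :: "'a \<times> 'a \<Rightarrow> real"
  assumes F: "F \<in> borel_measurable borel"
  shows "integrable (M2 \<Otimes>\<^sub>M M1) (\<lambda>z. F (snd z, fst z)) \<longleftrightarrow> integrable NN F"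
    and "(\<integral>z. F (snd z, fst z) \<partial>(M2 \<Otimes>\<^sub>M M1)) = (\<integral>z. F z \<partial>NN)"
proof -
  interpret F1: finite_measure M1 by (rule fin1)
  interpret F2: finite_measure M2 by (rule fin2)
  interpret P: pair_sigma_finite M1 M2 ..
  have e: "(\<lambda>(x, y). F (y, x)) = (\<lambda>z. F (snd z, fst z))" by (auto simp: fun_eq_iff)
  have Fm: "F \<in> borel_measurable NN" using F meas_NN by simp
  show "integrable (M2 \<Otimes>\<^sub>M M1) (\<lambda>z. F (snd z, fst z)) \<longleftrightarrow> integrable NN F"
    using P.integrable_product_swap_iff[of F] unfolding e .
  show "(\<integral>z. F (snd z, fst z) \<partial>(M2 \<Otimes>\<^sub>M M1)) = (\<integral>z. F z \<partial>NN)"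
    using P.integral_product_swap[OF Fm] unfolding e .
qed

lemma mpos1: "0 < measure M1 (space M1)"
proof (rule ccontr)
  interpret F1: finite_measure M1 by (rule fin1)
  assume "\<not> 0 < measure M1 (space M1)"
  then have "measure M1 (space M1) = 0" using measure_nonneg[of M1 "space M1"] by linarith
  then have "space M1 \<in> null_sets M1" by (simp add: F1.emeasure_eq_measure null_sets_def)
  then have "AE x in M1. m1 x = 0" by (rule AE_I') auto
  then have "(\<integral>x. m1 x \<partial>M1) = 0" by (simp add: integral_cong_AE[where g="\<lambda>_. 0"] meas_M1)
  moreover have "(\<integral>x. \<mu>1 x \<partial>lebesgue_on \<Omega>1) = (\<integral>x. m1 x \<partial>M1)"
    by (rule leb_transfer(2)[OF S1 mu1m m1b m1e])
  ultimately show False using int1 by simp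
qed

lemma mpos2: "0 < measure M2 (space M2)"
proof (rule ccontr)
  interpret F2: finite_measure M2 by (rule fin2)
  assume "\<not> 0 < measure M2 (space M2)"
  then have "measure M2 (space M2) = 0" using measure_nonneg[of M2 "space M2"] by linarith
  then have "space M2 \<in> null_sets M2" by (simp add: F2.emeasure_eq_measure null_sets_def)
  then have "AE x in M2. m2 x = 0" by (rule AE_I') auto
  then have "(\<integral>x. m2 x \<partial>M2) = 0" by (simp add: integral_cong_AE[where g="\<lambda>_. 0"] meas_M2)
  moreover have "(\<integral>x. \<mu>2 x \<partial>lebesgue_on \<Omega>2) = (\<integral>x. m2 x \<partial>M2)"
    by (rule leb_transfer(2)[OF S2 mu2m m2b m2e])
  ultimately show False using int2 by simp
qed

end


context conc begin

lemma side1: "a1 \<in> Lp_on q \<Omega>1"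
proof -
  have gam': "0 < \<gamma> powr (q - 1)" using gam by simp
  have cm: "cc \<in> borel_measurable (M1 \<Otimes>\<^sub>M M2)" using meas_NN ccm by simp
  have cb: "\<And>z. z \<in> space (M1 \<Otimes>\<^sub>M M2) \<Longrightarrow> C0 \<le> cc z \<and> cc z \<le> C" using ccb by simp
  have mum: "m1 \<in> borel_measurable M1" using meas_M1 m1b by simp
  have "AE x in lborel. x \<in> \<Omega>1 \<longrightarrow> \<delta> \<le> \<mu>1 x" using mud1 T_AE'[OF S1] by simp
  then have "AE x in lborel. x \<in> \<Omega>1 \<longrightarrow> \<delta> \<le> m1 x" using m1e by eventually_elim auto
  then have mud: "AE x in M1. \<delta> \<le> m1 x" using T_AE'[OF S1] T_AE[OF S1] by simp
  have mu1m': "(\<lambda>x. \<bar>\<mu>1 x\<bar> powr p) \<in> borel_measurable (lebesgue_on \<Omega>1)" using mu1m by measurable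
  have e: "AE x in lborel. x \<in> \<Omega>1 \<longrightarrow> \<bar>\<mu>1 x\<bar> powr p = \<bar>m1 x\<bar> powr p" using m1e by eventually_elim auto
  have mup: "integrable M1 (\<lambda>x. \<bar>m1 x\<bar> powr p)"
    using leb_transfer(1)[OF S1 mu1m' _ e] mu1 by (simp add: Lp_on_def)
  have mini': "(1/q) * (\<integral>z. max (g1 (fst z) + g2 (snd z) - cc z) 0 powr q \<partial>(M1 \<Otimes>\<^sub>M M2))
         - \<gamma> powr (q - 1) * (\<integral>x. g1 x * m1 x \<partial>M1)
       \<le> (1/q) * (\<integral>z. max (b (fst z) + g2 (snd z) - cc z) 0 powr q \<partial>(M1 \<Otimes>\<^sub>M M2))
         - \<gamma> powr (q - 1) * (\<integral>x. b x * m1 x \<partial>M1)"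
    if "b \<in> borel_measurable M1" "integrable M1 b" "integrable M1 (\<lambda>x. b x * m1 x)"
       "integrable (M1 \<Otimes>\<^sub>M M2) (\<lambda>z. max (b (fst z) + g2 (snd z) - cc z) 0 powr q)" for b
  proof -
    have "b \<in> borel_measurable borel" using that(1) meas_M1 by simp
    then have "EE g1 g2 \<le> EE b g2"
      using that a_facts by (intro EE_min) auto
    then show ?thesis unfolding EE_def by simp
  qed
  interpret cs: core_setup M1 M2 cc g1 m1 g2 p q "\<gamma> powr (q - 1)" \<delta> C0 C
    by (rule core_setup.intro[OF fin1 fin2 q1 q2 pq p1 gam' del cm cb mpos2 mum mud mup
          a_facts(1) a_facts(2) a_facts(3) a_facts(5) mini'])
  have gi: "integrable M1 (\<lambda>x. \<bar>g1 x\<bar> powr q)" by (rule cs.core_result)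
  have ia1: "integrable (lebesgue_on \<Omega>1) a1"
    using mini by (simp add: is_minimizer_def feasible_def)
  have a1m[measurable]: "a1 \<in> borel_measurable (lebesgue_on \<Omega>1)" using ia1 by auto
  have a1m': "(\<lambda>x. \<bar>a1 x\<bar> powr q) \<in> borel_measurable (lebesgue_on \<Omega>1)" by measurable
  have e1: "AE x in lborel. x \<in> \<Omega>1 \<longrightarrow> \<bar>a1 x\<bar> powr q = \<bar>g1 x\<bar> powr q" using g1e by eventually_elim auto
  have "integrable (lebesgue_on \<Omega>1) (\<lambda>x. \<bar>a1 x\<bar> powr q)"
    using leb_transfer(1)[OF S1 a1m' _ e1] gi by simp
  then show ?thesis unfolding Lp_on_def using a1m by simp
qed


lemma side2: "a2 \<in> Lp_on q \<Omega>2"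
proof -
  interpret F1: finite_measure M1 by (rule fin1)
  interpret F2: finite_measure M2 by (rule fin2)
  define cs where "cs z = cc (snd z, fst z)" for z
  have gam': "0 < \<gamma> powr (q - 1)" using gam by simp
  have swm: "(\<lambda>z::'a \<times> 'a. (snd z, fst z)) \<in> borel_measurable borel"
    by (intro borel_measurable_continuous_onI continuous_intros)
  have csb[measurable]: "cs \<in> borel_measurable borel"
    unfolding cs_def using measurable_compose[OF swm ccm] by simp
  have s21: "sets (M2 \<Otimes>\<^sub>M M1) = sets borel" unfolding T_prod[OF cpt2 cpt1] by simp
  have cm: "cs \<in> borel_measurable (M2 \<Otimes>\<^sub>M M1)"
  proof -
    have "measurable (M2 \<Otimes>\<^sub>M M1) (borel :: real measure) = measurable borel borel"
      by (rule measurable_cong_sets[OF s21 refl])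
    then show ?thesis using csb by simp
  qed
  have cb: "\<And>z. z \<in> space (M2 \<Otimes>\<^sub>M M1) \<Longrightarrow> C0 \<le> cs z \<and> cs z \<le> C" using ccb by (simp add: cs_def)
  have mum: "m2 \<in> borel_measurable M2" using meas_M2 m2b by simp
  have "AE x in lborel. x \<in> \<Omega>2 \<longrightarrow> \<delta> \<le> \<mu>2 x" using mud2 T_AE'[OF S2] by simp
  then have "AE x in lborel. x \<in> \<Omega>2 \<longrightarrow> \<delta> \<le> m2 x" using m2e by eventually_elim auto
  then have mud: "AE x in M2. \<delta> \<le> m2 x" using T_AE'[OF S2] T_AE[OF S2] by simp
  have mu2m': "(\<lambda>x. \<bar>\<mu>2 x\<bar> powr p) \<in> borel_measurable (lebesgue_on \<Omega>2)" using mu2m by measurable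
  have e: "AE x in lborel. x \<in> \<Omega>2 \<longrightarrow> \<bar>\<mu>2 x\<bar> powr p = \<bar>m2 x\<bar> powr p" using m2e by eventually_elim auto
  have mup: "integrable M2 (\<lambda>x. \<bar>m2 x\<bar> powr p)"
    using leb_transfer(1)[OF S2 mu2m' _ e] mu2 by (simp add: Lp_on_def)
  have swap_phi: "(\<lambda>z. max (b (fst z) + g1 (snd z) - cs z) 0 powr q)
      = (\<lambda>z. (\<lambda>w. max (g1 (fst w) + b (snd w) - cc w) 0 powr q) (snd z, fst z))" for b
    by (auto simp: fun_eq_iff cs_def add.commute)
  have g12i: "integrable (M2 \<Otimes>\<^sub>M M1) (\<lambda>z. max (g2 (fst z) + g1 (snd z) - cs z) 0 powr q)"
    unfolding swap_phi using swap_transfer(1)[of "\<lambda>w. max (g1 (fst w) + g2 (snd w) - cc w) 0 powr q"] a_facts(5)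
    by simp
  have mini': "(1/q) * (\<integral>z. max (g2 (fst z) + g1 (snd z) - cs z) 0 powr q \<partial>(M2 \<Otimes>\<^sub>M M1))
         - \<gamma> powr (q - 1) * (\<integral>x. g2 x * m2 x \<partial>M2)
       \<le> (1/q) * (\<integral>z. max (b (fst z) + g1 (snd z) - cs z) 0 powr q \<partial>(M2 \<Otimes>\<^sub>M M1))
         - \<gamma> powr (q - 1) * (\<integral>x. b x * m2 x \<partial>M2)"
    if "b \<in> borel_measurable M2" "integrable M2 b" "integrable M2 (\<lambda>x. b x * m2 x)"
       "integrable (M2 \<Otimes>\<^sub>M M1) (\<lambda>z. max (b (fst z) + g1 (snd z) - cs z) 0 powr q)" for b
  proof -
    have bb[measurable]: "b \<in> borel_measurable borel" using that(1) meas_M2 by simp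
    have Fb: "(\<lambda>w. max (g1 (fst w) + b (snd w) - cc w) 0 powr q) \<in> borel_measurable borel" by measurable
    have Fg: "(\<lambda>w. max (g1 (fst w) + g2 (snd w) - cc w) 0 powr q) \<in> borel_measurable borel" by measurable
    have ib: "integrable NN (\<lambda>w. max (g1 (fst w) + b (snd w) - cc w) 0 powr q)"
      using that(4) unfolding swap_phi swap_transfer(1)[OF Fb] .
    have "EE g1 g2 \<le> EE g1 b"
      using that a_facts ib bb by (intro EE_min) auto
    moreover have "(\<integral>z. max (b (fst z) + g1 (snd z) - cs z) 0 powr q \<partial>(M2 \<Otimes>\<^sub>M M1))
        = (\<integral>w. max (g1 (fst w) + b (snd w) - cc w) 0 powr q \<partial>NN)"
      unfolding swap_phi swap_transfer(2)[OF Fb] ..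
    moreover have "(\<integral>z. max (g2 (fst z) + g1 (snd z) - cs z) 0 powr q \<partial>(M2 \<Otimes>\<^sub>M M1))
        = (\<integral>w. max (g1 (fst w) + g2 (snd w) - cc w) 0 powr q \<partial>NN)"
      unfolding swap_phi swap_transfer(2)[OF Fg] ..
    ultimately show ?thesis unfolding EE_def by simp
  qed
  interpret cs: core_setup M2 M1 cs g2 m2 g1 p q "\<gamma> powr (q - 1)" \<delta> C0 C
    by (rule core_setup.intro[OF fin2 fin1 q1 q2 pq p1 gam' del cm cb mpos1 mum mud mup
          a_facts(2) a_facts(1) a_facts(4) g12i mini'])
  have gi: "integrable M2 (\<lambda>x. \<bar>g2 x\<bar> powr q)" by (rule cs.core_result)
  have ia2: "integrable (lebesgue_on \<Omega>2) a2"
    using mini by (simp add: is_minimizer_def feasible_def)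
  have a2m[measurable]: "a2 \<in> borel_measurable (lebesgue_on \<Omega>2)" using ia2 by auto
  have a2m': "(\<lambda>x. \<bar>a2 x\<bar> powr q) \<in> borel_measurable (lebesgue_on \<Omega>2)" by measurable
  have e2: "AE x in lborel. x \<in> \<Omega>2 \<longrightarrow> \<bar>a2 x\<bar> powr q = \<bar>g2 x\<bar> powr q" using g2e by eventually_elim auto
  have "integrable (lebesgue_on \<Omega>2) (\<lambda>x. \<bar>a2 x\<bar> powr q)"
    using leb_transfer(1)[OF S2 a2m' _ e2] gi by simp
  then show ?thesis unfolding Lp_on_def using a2m by simp
qed

end

theorem mainTheorem8:
  fixes \<Omega>1 \<Omega>2 :: "'a::euclidean_space set"
    and c :: "'a \<times> 'a \<Rightarrow> real"
    and \<gamma> p q \<delta> c0 :: real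
    and \<mu>1 \<mu>2 a1 a2 :: "'a \<Rightarrow> real"
  assumes "compact \<Omega>1" and "compact \<Omega>2"
    and "continuous_on (\<Omega>1 \<times> \<Omega>2) c"
    and "\<forall>z\<in>\<Omega>1 \<times> \<Omega>2. c z \<ge> c0"
    and "\<gamma> > 0"
    and "p > 1" and "1 / p + 1 / q = 1"
    and "p \<ge> 2"
    and "\<delta> > 0"
    and "\<mu>1 \<in> Lp_on p \<Omega>1" and "\<mu>2 \<in> Lp_on p \<Omega>2"
    and "AE x in lebesgue_on \<Omega>1. \<mu>1 x \<ge> \<delta>"
    and "AE x in lebesgue_on \<Omega>2. \<mu>2 x \<ge> \<delta>"
    and "(\<integral>x. \<mu>1 x \<partial>lebesgue_on \<Omega>1) = 1"
    and "(\<integral>x. \<mu>2 x \<partial>lebesgue_on \<Omega>2) = 1"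
    and "is_minimizer c \<gamma> q \<mu>1 \<mu>2 \<Omega>1 \<Omega>2 a1 a2"
  shows "a1 \<in> Lp_on q \<Omega>1 \<and> a2 \<in> Lp_on q \<Omega>2"
proof -
  note assms' = assms
  have pq: "1 / p + 1 / q = 1" and p1: "p > 1" and p2: "p \<ge> 2" using assms by auto
  have iq: "1 / q = 1 - 1 / p" using pq by simp
  have "0 < 1 / q" unfolding iq using p1 by simp
  then have q0: "0 < q" by simp
  have "1 / q < 1" unfolding iq using p1 by simp
  then have q1: "1 < q" using q0 by (simp add: divide_less_eq)
  have "1 / 2 \<le> 1 / q" unfolding iq using p2 by (simp add: divide_le_eq)
  then have q2: "q \<le> 2" using q0 by (simp add: divide_le_eq le_divide_eq)
  have feas: "feasible c \<gamma> q \<mu>1 \<mu>2 \<Omega>1 \<Omega>2 a1 a2" using assms(16) by (simp add: is_minimizer_def)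
  have S1: "\<Omega>1 \<in> sets borel" using assms(1) by (simp add: compact_imp_closed)
  have S2: "\<Omega>2 \<in> sets borel" using assms(2) by (simp add: compact_imp_closed)
  have a1m: "a1 \<in> borel_measurable (lebesgue_on \<Omega>1)" using feas by (auto simp: feasible_def)
  have a2m: "a2 \<in> borel_measurable (lebesgue_on \<Omega>2)" using feas by (auto simp: feasible_def)
  have mu1m: "\<mu>1 \<in> borel_measurable (lebesgue_on \<Omega>1)" using assms(10) by (simp add: Lp_on_def)
  have mu2m: "\<mu>2 \<in> borel_measurable (lebesgue_on \<Omega>2)" using assms(11) by (simp add: Lp_on_def)
  obtain g1 where g1: "g1 \<in> borel_measurable borel" "AE x in lborel. x \<in> \<Omega>1 \<longrightarrow> a1 x = g1 x"
    using T_borel_version[OF S1 a1m] by blast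
  obtain g2 where g2: "g2 \<in> borel_measurable borel" "AE x in lborel. x \<in> \<Omega>2 \<longrightarrow> a2 x = g2 x"
    using T_borel_version[OF S2 a2m] by blast
  obtain m1 where m1: "m1 \<in> borel_measurable borel" "AE x in lborel. x \<in> \<Omega>1 \<longrightarrow> \<mu>1 x = m1 x"
    using T_borel_version[OF S1 mu1m] by blast
  obtain m2 where m2: "m2 \<in> borel_measurable borel" "AE x in lborel. x \<in> \<Omega>2 \<longrightarrow> \<mu>2 x = m2 x"
    using T_borel_version[OF S2 mu2m] by blast
  have "compact (c ` (\<Omega>1 \<times> \<Omega>2))"
    using assms(1,2,3) by (intro compact_continuous_image compact_Times)
  then obtain B where B: "B > 0" "\<And>z. z \<in> \<Omega>1 \<times> \<Omega>2 \<Longrightarrow> norm (c z) \<le> B"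
    using compact_imp_bounded bounded_pos by (metis imageI)
  define cc where "cc = (\<lambda>z. indicator (\<Omega>1 \<times> \<Omega>2) z * c z)"
  have ccb: "\<And>z. - B \<le> cc z \<and> cc z \<le> B"
  proof -
    fix z
    show "- B \<le> cc z \<and> cc z \<le> B"
      using B(1) B(2)[of z] unfolding cc_def by (cases "z \<in> \<Omega>1 \<times> \<Omega>2") auto
  qed
  interpret conc \<Omega>1 \<Omega>2 c \<gamma> p q \<delta> \<mu>1 \<mu>2 a1 a2 g1 g2 m1 m2 cc "- B" B
    by (rule conc.intro[OF assms(1,2,3,5,6,7) q1 q2 assms(9,10,11,12,13,15,14,16) g1 g2 m1 m2 cc_def ccb])
  show ?thesis using side1 side2 by simp
qed


end
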